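(* Let $\rho$ be a two-qubit state whose two reduced states are both maximally mixed, i.e. $\mathrm{Tr}[\rho(\sigma_i\otimes\mathbb{1})]=\mathrm{Tr}[\rho(\mathbb{1}\otimes\sigma_i)]=0$ for $i=1,2,3$, and let $T$ be its correlation matrix $T_{ij}=\mathrm{Tr}[\rho(\sigma_i\otimes\sigma_j)]$, brought by local unitary operations to the diagonal form $T=\mathrm{diag}(t_1,t_2,t_3)$. Then $$G(\rho)=\tfrac14\big[t_1^2+t_2^2+t_3^2-\max\{t_1^2,t_2^2,t_3^2\}\big],$$ and $G(\rho)=G^{\to}(\rho)=G^{\leftarrow}(\rho)$.
   Context: $\sigma_i$ are the Pauli matrices. The Hilbert–Schmidt distance is $D(M,N)=\sqrt{\mathrm{Tr}[(M-N)(M-N)^\dagger]}$. For unit vectors $\vec{k},\vec{\ell}\in\mathbb{R}^3$ let $\Pi^A_\pm=\frac12(\mathbb{1}\pm\vec{k}\cdot\vec{\sigma})$, $\Pi^B_\pm=\frac12(\mathbb{1}\pm\vec{\ell}\cdot\vec{\sigma})$. Define $\chi_{\vec{k},\vec{\ell}}=\sum_{i,j=\pm}(\Pi^A_i\otimes\Pi^B_j)\rho(\Pi^A_i\otimes\Pi^B_j)$, $\rho^{\to}_{\vec{k}}=\sum_{i=\pm}(\Pi^A_i\otimes\mathbb{1})\rho(\Pi^A_i\otimes\mathbb{1})$, $\rho^{\leftarrow}_{\vec{\ell}}=\sum_{j=\pm}(\mathbb{1}\otimes\Pi^B_j)\rho(\mathbb{1}\otimes\Pi^B_j)$. Then $G(\rho)=\min_{\vec{k},\vec{\ell}}D^2(\rho,\chi_{\vec{k},\vec{\ell}})$,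 $G^{\to}(\rho)=\min_{\vec{k}}D^2(\rho,\rho^{\to}_{\vec{k}})$, $G^{\leftarrow}(\rho)=\min_{\vec{\ell}}D^2(\rho,\rho^{\leftarrow}_{\vec{\ell}})$, minima over unit vectors. (All these quantities are invariant under local unitaries.) *)

theory Defs
  imports Complex_Main "Jordan_Normal_Form.Matrix"
begin

definition mtrace :: "complex mat \<Rightarrow> complex" where
  "mtrace A = (\<Sum>i<dim_row A. A $$ (i, i))"

definition dagger :: "complex mat \<Rightarrow> complex mat" where
  "dagger A = mat (dim_col A) (dim_row A) (\<lambda>(i, j). cnj (A $$ (j, i)))"

definition kron :: "complex mat \<Rightarrow> complex mat \<Rightarrow> complex mat" where
  "kron A B = mat (dim_row A * dim_row B) (dim_col A * dim_col B)
     (\<lambda>(i, j). A $$ (i div dim_row B, j div dim_col B) * B $$ (i mod dim_row B, j mod dim_col B))"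

definition pauli :: "nat \<Rightarrow> complex mat" where
  "pauli n = (if n = 1 then mat_of_rows_list 2 [[0, 1], [1, 0]]
              else if n = 2 then mat_of_rows_list 2 [[0, -\<i>], [\<i>, 0]]
              else if n = 3 then mat_of_rows_list 2 [[1, 0], [0, -1]]
              else 1\<^sub>m 2)"

definition density4 :: "complex mat \<Rightarrow> bool" where
  "density4 \<rho> \<longleftrightarrow> \<rho> \<in> carrier_mat 4 4 \<and> dagger \<rho> = \<rho> \<and>
     (\<forall>v \<in> carrier_vec 4. 0 \<le> Re (map_vec cnj v \<bullet> (\<rho> *\<^sub>v v))) \<and> mtrace \<rho> = 1"

definition unitary2 :: "complex mat \<Rightarrow> bool" where
  "unitary2 U \<longleftrightarrow> U \<in> carrier_mat 2 2 \<and> U * dagger U = 1\<^sub>m 2"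

definition HS_dist :: "complex mat \<Rightarrow> complex mat \<Rightarrow> real" where
  "HS_dist M N = sqrt (Re (mtrace ((M - N) * dagger (M - N))))"

definition unit3 :: "(nat \<Rightarrow> real) \<Rightarrow> bool" where
  "unit3 k \<longleftrightarrow> (k 1)\<^sup>2 + (k 2)\<^sup>2 + (k 3)\<^sup>2 = 1"

definition dot_sigma :: "(nat \<Rightarrow> real) \<Rightarrow> complex mat" where
  "dot_sigma k = complex_of_real (k 1) \<cdot>\<^sub>m pauli 1 + complex_of_real (k 2) \<cdot>\<^sub>m pauli 2
                 + complex_of_real (k 3) \<cdot>\<^sub>m pauli 3"

definition proj :: "real \<Rightarrow> (nat \<Rightarrow> real) \<Rightarrow> complex mat" where
  "proj s k = (1/2 :: complex) \<cdot>\<^sub>m (1\<^sub>m 2 + complex_of_real s \<cdot>\<^sub>m dot_sigma k)"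

definition sandwich :: "complex mat \<Rightarrow> complex mat \<Rightarrow> complex mat" where
  "sandwich P \<rho> = P * \<rho> * P"

definition chi :: "complex mat \<Rightarrow> (nat \<Rightarrow> real) \<Rightarrow> (nat \<Rightarrow> real) \<Rightarrow> complex mat" where
  "chi \<rho> k l =
      sandwich (kron (proj 1 k) (proj 1 l)) \<rho> + sandwich (kron (proj 1 k) (proj (-1) l)) \<rho>
    + sandwich (kron (proj (-1) k) (proj 1 l)) \<rho> + sandwich (kron (proj (-1) k) (proj (-1) l)) \<rho>"

definition rho_right :: "complex mat \<Rightarrow> (nat \<Rightarrow> real) \<Rightarrow> complex mat" where
  "rho_right \<rho> k = sandwich (kron (proj 1 k) (1\<^sub>m 2)) \<rho> + sandwich (kron (proj (-1) k) (1\<^sub>m 2)) \<rho>"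

definition rho_left :: "complex mat \<Rightarrow> (nat \<Rightarrow> real) \<Rightarrow> complex mat" where
  "rho_left \<rho> l = sandwich (kron (1\<^sub>m 2) (proj 1 l)) \<rho> + sandwich (kron (1\<^sub>m 2) (proj (-1) l)) \<rho>"

definition G :: "complex mat \<Rightarrow> real" where
  "G \<rho> = Inf {(HS_dist \<rho> (chi \<rho> k l))\<^sup>2 | k l. unit3 k \<and> unit3 l}"

definition G_right :: "complex mat \<Rightarrow> real" where
  "G_right \<rho> = Inf {(HS_dist \<rho> (rho_right \<rho> k))\<^sup>2 | k. unit3 k}"

definition G_left :: "complex mat \<Rightarrow> real" where
  "G_left \<rho> = Inf {(HS_dist \<rho> (rho_left \<rho> l))\<^sup>2 | l. unit3 l}"

definition corr :: "complex mat \<Rightarrow> nat \<Rightarrow> nat \<Rightarrow> complex" where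
  "corr \<rho> i j = mtrace (\<rho> * kron (pauli i) (pauli j))"

end

theory Submission imports Defs "Jordan_Normal_Form.Determinant" begin

lemma sum4: "(\<Sum>i\<in>{0..<4::nat}. f i) = f 0 + f 1 + f 2 + f 3"
  by (simp add: numeral_eq_Suc atLeast0LessThan lessThan_Suc ac_simps)
lemma sum2: "(\<Sum>i\<in>{0..<2::nat}. f i) = f 0 + f 1"
  by (simp add: numeral_eq_Suc atLeast0LessThan lessThan_Suc ac_simps)
lemma sum4': "(\<Sum>i<4::nat. f i) = f 0 + f 1 + f 2 + f 3"
  by (simp add: numeral_eq_Suc lessThan_Suc ac_simps)
lemma sum2': "(\<Sum>i<2::nat. f i) = f 0 + f 1"
  by (simp add: numeral_eq_Suc lessThan_Suc ac_simps)

lemma less4E: "(i::nat) < 4 \<Longrightarrow> (i = 0 \<Longrightarrow> P) \<Longrightarrow> (i = 1 \<Longrightarrow> P) \<Longrightarrow> (i = 2 \<Longrightarrow> P) \<Longrightarrow> (i = 3 \<Longrightarrow> P) \<Longrightarrow> P" by linarith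
lemma less2E: "(i::nat) < 2 \<Longrightarrow> (i = 0 \<Longrightarrow> P) \<Longrightarrow> (i = 1 \<Longrightarrow> P) \<Longrightarrow> P" by linarith

lemma kron_index: "i < dim_row A * dim_row B \<Longrightarrow> j < dim_col A * dim_col B \<Longrightarrow>
   kron A B $$ (i,j) = A $$ (i div dim_row B, j div dim_col B) * B $$ (i mod dim_row B, j mod dim_col B)"
  by (simp add: kron_def)
lemma kron_dim[simp]: "dim_row (kron A B) = dim_row A * dim_row B" "dim_col (kron A B) = dim_col A * dim_col B"
  by (simp_all add: kron_def)

lemma pauli_carrier[simp]: "pauli n \<in> carrier_mat 2 2"
  by (simp add: pauli_def mat_of_rows_list_def numeral_eq_Suc)
lemma pauli_dim[simp]: "dim_row (pauli n) = 2" "dim_col (pauli n) = 2"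
  using pauli_carrier[of n] by (auto simp del: pauli_carrier)

lemma kron_carrier2: "A \<in> carrier_mat 2 2 \<Longrightarrow> B \<in> carrier_mat 2 2 \<Longrightarrow> kron A B \<in> carrier_mat 4 4"
  by (auto simp: kron_def)
lemma dagger_carrier: "A \<in> carrier_mat n m \<Longrightarrow> dagger A \<in> carrier_mat m n"
  by (auto simp: dagger_def)

lemma pauli0: "pauli 0 = 1\<^sub>m 2" by (simp add: pauli_def)

lemma pauli_idx:
  "pauli 0 $$ (0,0) = 1" "pauli 0 $$ (0,1) = 0" "pauli 0 $$ (1,0) = 0" "pauli 0 $$ (1,1) = 1"
  "pauli 1 $$ (0,0) = 0" "pauli 1 $$ (0,1) = 1" "pauli 1 $$ (1,0) = 1" "pauli 1 $$ (1,1) = 0"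
  "pauli 2 $$ (0,0) = 0" "pauli 2 $$ (0,1) = -\<i>" "pauli 2 $$ (1,0) = \<i>" "pauli 2 $$ (1,1) = 0"
  "pauli 3 $$ (0,0) = 1" "pauli 3 $$ (0,1) = 0" "pauli 3 $$ (1,0) = 0" "pauli 3 $$ (1,1) = -1"
  by (simp_all add: pauli_def mat_of_rows_list_def)

lemmas pauli_idx' = pauli_idx[unfolded One_nat_def]


lemma mult_index: "i < dim_row A \<Longrightarrow> j < dim_col B \<Longrightarrow> dim_col A = dim_row B \<Longrightarrow>
   (A * B) $$ (i,j) = (\<Sum>k<dim_col A. A $$ (i,k) * B $$ (k,j))"
  by (simp add: scalar_prod_def atLeast0LessThan)

lemma dagger_index: "i < dim_col A \<Longrightarrow> j < dim_row A \<Longrightarrow> dagger A $$ (i,j) = cnj (A $$ (j,i))"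
  by (simp add: dagger_def)
lemma dagger_dim[simp]: "dim_row (dagger A) = dim_col A" "dim_col (dagger A) = dim_row A"
  by (simp_all add: dagger_def)

lemma mtrace_mult: "A \<in> carrier_mat n m \<Longrightarrow> B \<in> carrier_mat m n \<Longrightarrow>
   mtrace (A * B) = (\<Sum>i<n. \<Sum>k<m. A $$ (i,k) * B $$ (k,i))"
  unfolding mtrace_def apply (intro sum.cong) apply simp apply (subst mult_index) by auto

lemma mtrace_comm: "A \<in> carrier_mat n m \<Longrightarrow> B \<in> carrier_mat m n \<Longrightarrow> mtrace (A * B) = mtrace (B * A)"
  by (simp add: mtrace_mult sum.swap[of _ "{..<n}"] mult.commute)


lemma kron_mult:
  assumes "A \<in> carrier_mat 2 2" "B \<in> carrier_mat 2 2" "C \<in> carrier_mat 2 2" "D \<in> carrier_mat 2 2"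
  shows "kron A B * kron C D = kron (A * C) (B * D)"
proof (rule eq_matI)
  fix i j assume "i < dim_row (kron (A * C) (B * D))" "j < dim_col (kron (A * C) (B * D))"
  then have i: "i < 4" and j: "j < 4" using assms by auto
  show "(kron A B * kron C D) $$ (i, j) = kron (A * C) (B * D) $$ (i, j)"
    using assms i j
    by (elim less4E[of i] less4E[of j]; simp add: kron_index scalar_prod_def sum4 sum2; simp add: ring_distribs)
qed (use assms in \<open>auto\<close>)

abbreviation S4 :: "nat \<Rightarrow> nat \<Rightarrow> nat \<Rightarrow> nat \<Rightarrow> complex" where
  "S4 a b i j \<equiv> kron (pauli a) (pauli b) $$ (i,j)"

abbreviation c4 :: "complex mat \<Rightarrow> nat \<Rightarrow> nat \<Rightarrow> complex" where
  "c4 Y a b \<equiv> mtrace (Y * kron (pauli a) (pauli b))"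

lemma pauli_expand4:
  fixes x :: "nat \<Rightarrow> nat \<Rightarrow> complex"
  assumes "i < 4" "j < 4"
  shows "4 * x i j = (\<Sum>a<4. \<Sum>b<4. (\<Sum>k<4. \<Sum>l<4. x k l * S4 a b l k) * S4 a b i j)"
  using assms
  by (elim less4E[of i] less4E[of j]; simp add: sum4' kron_index pauli_idx pauli_idx'; simp add: ring_distribs)

lemma S4_orth:
  assumes "a < 4" "b < 4" "c < 4" "d < 4"
  shows "(\<Sum>i<4. \<Sum>j<4. S4 a b i j * cnj (S4 c d i j)) = (if a = c \<and> b = d then 4 else 0)"
  using assms
  by (elim less4E[of a] less4E[of b] less4E[of c] less4E[of d]; simp add: sum4' kron_index pauli_idx pauli_idx')


lemma sum_prod_swap:
  fixes f g :: "'x \<Rightarrow> 'i \<Rightarrow> 'j \<Rightarrow> complex"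
  shows "(\<Sum>i\<in>I. \<Sum>j\<in>J. (\<Sum>p\<in>P. f p i j) * (\<Sum>q\<in>P. g q i j))
       = (\<Sum>p\<in>P. \<Sum>q\<in>P. \<Sum>i\<in>I. \<Sum>j\<in>J. f p i j * g q i j)"
proof -
  have "(\<Sum>i\<in>I. \<Sum>j\<in>J. (\<Sum>p\<in>P. f p i j) * (\<Sum>q\<in>P. g q i j))
      = (\<Sum>i\<in>I. \<Sum>j\<in>J. \<Sum>p\<in>P. \<Sum>q\<in>P. f p i j * g q i j)"
    by (simp add: sum_product)
  also have "\<dots> = (\<Sum>i\<in>I. \<Sum>p\<in>P. \<Sum>j\<in>J. \<Sum>q\<in>P. f p i j * g q i j)"
    by (intro sum.cong refl) (rule sum.swap)
  also have "\<dots> = (\<Sum>p\<in>P. \<Sum>i\<in>I. \<Sum>j\<in>J. \<Sum>q\<in>P. f p i j * g q i j)"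
    by (rule sum.swap)
  also have "\<dots> = (\<Sum>p\<in>P. \<Sum>i\<in>I. \<Sum>q\<in>P. \<Sum>j\<in>J. f p i j * g q i j)"
    by (intro sum.cong refl) (rule sum.swap)
  also have "\<dots> = (\<Sum>p\<in>P. \<Sum>q\<in>P. \<Sum>i\<in>I. \<Sum>j\<in>J. f p i j * g q i j)"
    by (intro sum.cong refl) (rule sum.swap)
  finally show ?thesis .
qed

lemma sum_pair: "(\<Sum>p\<in>A \<times> B. f (fst p) (snd p)) = (\<Sum>a\<in>A. \<Sum>b\<in>B. f a b)"
  by (simp add: sum.cartesian_product split_beta)

lemma parseval4:
  assumes Y: "Y \<in> carrier_mat 4 4"
  shows "4 * mtrace (Y * dagger Y) = (\<Sum>a<4. \<Sum>b<4. c4 Y a b * cnj (c4 Y a b))"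
proof -
  define P where "P = {..<4::nat} \<times> {..<4::nat}"
  define c where "c p = c4 Y (fst p) (snd p)" for p
  define S where "S p i j = S4 (fst p) (snd p) i j" for p i j
  have d: "dagger Y \<in> carrier_mat 4 4" using Y by (rule dagger_carrier)
  have k: "\<And>a b. kron (pauli a) (pauli b) \<in> carrier_mat 4 4" by (simp add: kron_carrier2)
  have cf: "c4 Y a b = (\<Sum>k<4. \<Sum>l<4. Y $$ (k,l) * S4 a b l k)" for a b
    by (simp add: mtrace_mult[OF Y k])
  have e: "4 * Y $$ (i,j) = (\<Sum>p\<in>P. c p * S p i j)" if "i < 4" "j < 4" for i j
  proof -
    have "(\<Sum>p\<in>P. c p * S p i j) = (\<Sum>a<4. \<Sum>b<4. c4 Y a b * S4 a b i j)"
      unfolding P_def c_def S_def by (rule sum_pair[where f="\<lambda>a b. c4 Y a b * S4 a b i j"])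
    also have "\<dots> = (\<Sum>a<4. \<Sum>b<4. (\<Sum>k<4. \<Sum>l<4. Y $$ (k,l) * S4 a b l k) * S4 a b i j)"
      by (simp only: cf)
    also have "\<dots> = 4 * Y $$ (i,j)"
      using pauli_expand4[OF that, of "\<lambda>k l. Y $$ (k,l)"] by simp
    finally show ?thesis by simp
  qed
  have tr: "mtrace (Y * dagger Y) = (\<Sum>i<4. \<Sum>j<4. Y $$ (i,j) * cnj (Y $$ (i,j)))"
    using Y by (simp add: mtrace_mult[OF Y d] dagger_index)
  have "16 * mtrace (Y * dagger Y) = (\<Sum>i<4. \<Sum>j<4. (4 * Y $$ (i,j)) * cnj (4 * Y $$ (i,j)))"
    by (simp add: tr sum_distrib_left mult_ac)
  also have "\<dots> = (\<Sum>i<4. \<Sum>j<4. (\<Sum>p\<in>P. c p * S p i j) * (\<Sum>q\<in>P. cnj (c q) * cnj (S q i j)))"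
    by (intro sum.cong refl) (simp add: e)
  also have "\<dots> = (\<Sum>p\<in>P. \<Sum>q\<in>P. \<Sum>i<4. \<Sum>j<4. (c p * S p i j) * (cnj (c q) * cnj (S q i j)))"
    by (rule sum_prod_swap[where f="\<lambda>p i j. c p * S p i j" and g="\<lambda>q i j. cnj (c q) * cnj (S q i j)"])
  also have "\<dots> = (\<Sum>p\<in>P. \<Sum>q\<in>P. c p * cnj (c q) * (\<Sum>i<4. \<Sum>j<4. S p i j * cnj (S q i j)))"
    by (simp add: sum_distrib_left mult_ac)
  also have "\<dots> = (\<Sum>p\<in>P. \<Sum>q\<in>P. c p * cnj (c q) * (if p = q then 4 else 0))"
    apply (intro sum.cong refl)
    subgoal for p q
      using S4_orth[of "fst p" "snd p" "fst q" "snd q"] by (auto simp: S_def P_def prod_eq_iff)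
    done
  also have "\<dots> = (\<Sum>p\<in>P. \<Sum>q\<in>P. if p = q then 4 * (c p * cnj (c q)) else 0)"
    by (intro sum.cong refl) auto
  also have "\<dots> = (\<Sum>p\<in>P. 4 * (c p * cnj (c p)))"
    by (intro sum.cong refl) (simp add: P_def)
  also have "\<dots> = 4 * (\<Sum>a<4. \<Sum>b<4. c4 Y a b * cnj (c4 Y a b))"
    by (simp add: P_def c_def sum_pair[where f="\<lambda>a b. 4 * (c4 Y a b * cnj (c4 Y a b))"] sum_distrib_left)
  finally show ?thesis by simp
qed

abbreviation c2 :: "nat \<Rightarrow> complex mat \<Rightarrow> complex" where
  "c2 a A \<equiv> mtrace (pauli a * A)"

lemma proj_carrier[simp]: "proj s k \<in> carrier_mat 2 2"
  by (simp add: proj_def dot_sigma_def)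
lemma proj_dim[simp]: "dim_row (proj s k) = 2" "dim_col (proj s k) = 2"
  using proj_carrier[of s k] by (auto simp del: proj_carrier)

lemma proj_idx:
  "proj s k $$ (0,0) = (1 + complex_of_real s * complex_of_real (k 3)) / 2"
  "proj s k $$ (0,1) = complex_of_real s * (complex_of_real (k 1) - \<i> * complex_of_real (k 2)) / 2"
  "proj s k $$ (1,0) = complex_of_real s * (complex_of_real (k 1) + \<i> * complex_of_real (k 2)) / 2"
  "proj s k $$ (1,1) = (1 - complex_of_real s * complex_of_real (k 3)) / 2"
  by (simp_all add: proj_def dot_sigma_def pauli_idx pauli_idx' algebra_simps)
lemmas proj_idx' = proj_idx[unfolded One_nat_def]

definition phic :: "(nat \<Rightarrow> real) \<Rightarrow> nat \<Rightarrow> nat \<Rightarrow> real" where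
  "phic k m a = (if m = 0 \<and> a = 0 then 1 + ((k 1)\<^sup>2 + (k 2)\<^sup>2 + (k 3)\<^sup>2)
      else if m = 0 \<or> a = 0 then 0
      else (if m = a then 1 - ((k 1)\<^sup>2 + (k 2)\<^sup>2 + (k 3)\<^sup>2) else 0) + 2 * k m * k a)"

lemma c2_mult: "A \<in> carrier_mat 2 2 \<Longrightarrow> c2 a A = (\<Sum>i<2. \<Sum>j<2. pauli a $$ (i,j) * A $$ (j,i))"
  by (simp add: mtrace_mult[of _ 2 2])

lemma sandwich_idx2: "P \<in> carrier_mat 2 2 \<Longrightarrow> A \<in> carrier_mat 2 2 \<Longrightarrow> i < 2 \<Longrightarrow> j < 2 \<Longrightarrow>
  sandwich P A $$ (i,j) = (\<Sum>y<2. \<Sum>x<2. P $$ (i,x) * A $$ (x,y) * P $$ (y,j))"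
  unfolding sandwich_def
  by (simp add: scalar_prod_def sum2 sum2' algebra_simps)

lemma sandwich_carrier: "P \<in> carrier_mat n n \<Longrightarrow> A \<in> carrier_mat n n \<Longrightarrow> sandwich P A \<in> carrier_mat n n"
  unfolding sandwich_def by auto

lemma phi_coef:
  assumes "m < 4" "a < 4"
  shows "c2 m (sandwich (proj 1 k) (pauli a)) + c2 m (sandwich (proj (-1) k) (pauli a)) = complex_of_real (phic k m a)"
  using assms
  apply (simp add: c2_mult sandwich_carrier)
  apply (elim less4E[of m] less4E[of a])
  apply (simp_all add: sum2' sandwich_idx2 pauli_idx pauli_idx' proj_idx proj_idx' phic_def)
  apply (simp_all add: complex_eq_iff field_simps power2_eq_square)
  done


lemma id_coef:
  assumes "n < 4" "b < 4"
  shows "c2 n (sandwich (1\<^sub>m 2) (pauli b)) = (if n = b then 2 else 0)"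
  using assms
  apply (simp add: c2_mult sandwich_carrier)
  apply (elim less4E[of n] less4E[of b])
  apply (simp_all add: sum2' sandwich_idx2 pauli_idx pauli_idx')
  done

lemma parseval2:
  assumes "H \<in> carrier_mat 2 2" "K \<in> carrier_mat 2 2"
  shows "2 * mtrace (H * K) = (\<Sum>a<4. c2 a H * c2 a K)"
  using assms
  apply (simp add: c2_mult mtrace_mult[of _ 2 2])
  apply (simp add: sum2' sum4' pauli_idx pauli_idx')
  apply (simp add: algebra_simps)
  done

lemma herm_entries:
  assumes "H \<in> carrier_mat n n" "dagger H = H" "i < n" "j < n"
  shows "H $$ (j,i) = cnj (H $$ (i,j))"
proof -
  have "dagger H $$ (j,i) = cnj (H $$ (i,j))" using assms(1,3,4) by (simp add: dagger_index)
  with assms(2) show ?thesis by simp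
qed

lemma herm2:
  assumes H: "H \<in> carrier_mat 2 2" and h: "dagger H = H" and a: "a < 4"
  shows "cnj (c2 a H) = c2 a H"
proof -
  have e1: "H $$ (1,0) = cnj (H $$ (0,1))" using herm_entries[OF H h, of 0 1] by simp
  have e0: "cnj (H $$ (0,0)) = H $$ (0,0)" using herm_entries[OF H h, of 0 0] by simp
  have e2: "cnj (H $$ (1,1)) = H $$ (1,1)" using herm_entries[OF H h, of 1 1] by simp
  show ?thesis
    using a H
    apply (simp add: c2_mult)
    apply (elim less4E[of a])
    apply (simp_all add: sum2' pauli_idx pauli_idx' e1[unfolded One_nat_def] e0 e2[unfolded One_nat_def])
    done
qed

lemma beta_expand:
  assumes R: "R \<in> carrier_mat 4 4" and A: "A \<in> carrier_mat 2 2" and B: "B \<in> carrier_mat 2 2"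
  shows "4 * mtrace (R * kron A B) = (\<Sum>a<4. \<Sum>b<4. c2 a A * c2 b B * c4 R a b)"
proof -
  have k: "\<And>a b. kron (pauli a) (pauli b) \<in> carrier_mat 4 4" by (simp add: kron_carrier2)
  show ?thesis
    using R A B
    apply (simp add: c2_mult mtrace_mult[OF R k] mtrace_mult[OF R kron_carrier2[OF A B]])
    apply (simp add: sum2' sum4' pauli_idx pauli_idx' kron_index)
    apply (simp add: algebra_simps)
    done
qed


lemma herm4:
  assumes R: "R \<in> carrier_mat 4 4" and h: "dagger R = R" and ab: "a < 4" "b < 4"
  shows "cnj (c4 R a b) = c4 R a b"
proof -
  have o: "R $$ (j,i) = cnj (R $$ (i,j))" if "i < 4" "j < 4" for i j using herm_entries[OF R h that] .
  have d: "cnj (R $$ (i,i)) = R $$ (i,i)" if "i < 4" for i using herm_entries[OF R h that that] by simp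
  note E = o[of 0 1] o[of 0 2] o[of 0 3] o[of 1 2] o[of 1 3] o[of 2 3] d[of 0] d[of 1] d[of 2] d[of 3]
  have k: "\<And>a b. kron (pauli a) (pauli b) \<in> carrier_mat 4 4" by (simp add: kron_carrier2)
  show ?thesis
    using ab
    apply (simp add: mtrace_mult[OF R k])
    apply (elim less4E[of a] less4E[of b])
    apply (simp_all add: sum4' kron_index pauli_idx pauli_idx' E E[unfolded One_nat_def])
    done
qed

lemma mtrace_add: "A \<in> carrier_mat n n \<Longrightarrow> B \<in> carrier_mat n n \<Longrightarrow> mtrace (A + B) = mtrace A + mtrace B"
  by (simp add: mtrace_def sum.distrib)

lemma c4_add: "A \<in> carrier_mat 4 4 \<Longrightarrow> B \<in> carrier_mat 4 4 \<Longrightarrow> c4 (A + B) a b = c4 A a b + c4 B a b"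
  using kron_carrier2[OF pauli_carrier pauli_carrier, of a b]
  by (simp add: add_mult_distrib_mat[of _ 4 4 _ _ 4] mtrace_add[of _ 4])

lemma c4_minus: "A \<in> carrier_mat 4 4 \<Longrightarrow> B \<in> carrier_mat 4 4 \<Longrightarrow> c4 (A - B) a b = c4 A a b - c4 B a b"
  using kron_carrier2[OF pauli_carrier pauli_carrier, of a b]
  by (simp add: minus_mult_distrib_mat[of _ 4 4 _ _ 4] mtrace_def sum_subtractf)

lemma sandwich_adj:
  assumes "W \<in> carrier_mat n n" "R \<in> carrier_mat n n" "Z \<in> carrier_mat n n"
  shows "mtrace (sandwich W R * Z) = mtrace (R * sandwich W Z)"
proof -
  have e1: "sandwich W R * Z = W * (R * W * Z)" unfolding sandwich_def using assms
    by (simp add: assoc_mult_mat[of W n n "R * W" n Z n])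
  have c: "R * W * Z \<in> carrier_mat n n" using assms by auto
  have e2: "mtrace (W * (R * W * Z)) = mtrace ((R * W * Z) * W)" by (rule mtrace_comm[OF assms(1) c])
  have e3: "(R * W * Z) * W = R * sandwich W Z" unfolding sandwich_def using assms
    by (simp add: assoc_mult_mat[of R n n "W * Z" n W n])
  show ?thesis by (simp only: e1 e2 e3)
qed

lemma sandwich_kron:
  assumes "P \<in> carrier_mat 2 2" "Q \<in> carrier_mat 2 2" "A \<in> carrier_mat 2 2" "B \<in> carrier_mat 2 2"
  shows "sandwich (kron P Q) (kron A B) = kron (sandwich P A) (sandwich Q B)"
  using assms by (simp add: sandwich_def kron_mult)

lemma sw_c4:
  assumes R: "R \<in> carrier_mat 4 4" and P: "P \<in> carrier_mat 2 2" and Q: "Q \<in> carrier_mat 2 2"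
  shows "4 * c4 (sandwich (kron P Q) R) a b
     = (\<Sum>m<4. \<Sum>n<4. c2 m (sandwich P (pauli a)) * c2 n (sandwich Q (pauli b)) * c4 R m n)"
proof -
  have "c4 (sandwich (kron P Q) R) a b = mtrace (R * sandwich (kron P Q) (kron (pauli a) (pauli b)))"
    using R P Q by (intro sandwich_adj kron_carrier2) auto
  also have "\<dots> = mtrace (R * kron (sandwich P (pauli a)) (sandwich Q (pauli b)))"
    using P Q by (simp add: sandwich_kron)
  finally show ?thesis
    using beta_expand[OF R sandwich_carrier[OF P pauli_carrier] sandwich_carrier[OF Q pauli_carrier]]
    by simp
qed


lemma chi_c4:
  assumes R: "R \<in> carrier_mat 4 4" and ab: "a < 4" "b < 4"
  shows "4 * c4 (chi R k l) a b = (\<Sum>m<4. \<Sum>n<4. complex_of_real (phic k m a) * complex_of_real (phic l n b) * c4 R m n)"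
proof -
  define S where "S s t = sandwich (kron (proj s k) (proj t l)) R" for s t
  have C: "S s t \<in> carrier_mat 4 4" for s t unfolding S_def
    by (intro sandwich_carrier kron_carrier2 R proj_carrier)
  define f where "f s m = c2 m (sandwich (proj s k) (pauli a))" for s m
  define g where "g t n = c2 n (sandwich (proj t l) (pauli b))" for t n
  have sw: "4 * c4 (S s t) a b = (\<Sum>m<4. \<Sum>n<4. f s m * g t n * c4 R m n)" for s t
    unfolding S_def f_def g_def by (rule sw_c4[OF R proj_carrier proj_carrier])
  have "c4 (chi R k l) a b = c4 (S 1 1) a b + c4 (S 1 (-1)) a b + c4 (S (-1) 1) a b + c4 (S (-1) (-1)) a b"
    unfolding chi_def S_def[symmetric] using C by (simp add: c4_add)
  then have "4 * c4 (chi R k l) a b = 4 * c4 (S 1 1) a b + 4 * c4 (S 1 (-1)) a b + 4 * c4 (S (-1) 1) a b + 4 * c4 (S (-1) (-1)) a b"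
    by (simp add: algebra_simps)
  also have "\<dots> = (\<Sum>m<4. \<Sum>n<4. (f 1 m + f (-1) m) * (g 1 n + g (-1) n) * c4 R m n)"
    unfolding sw by (simp add: algebra_simps sum.distrib)
  also have "\<dots> = (\<Sum>m<4. \<Sum>n<4. complex_of_real (phic k m a) * complex_of_real (phic l n b) * c4 R m n)"
    by (intro sum.cong refl) (simp add: f_def g_def phi_coef ab)
  finally show ?thesis .
qed

lemma right_c4:
  assumes R: "R \<in> carrier_mat 4 4" and ab: "a < 4" "b < 4"
  shows "4 * c4 (rho_right R k) a b = (\<Sum>m<4. \<Sum>n<4. complex_of_real (phic k m a) * (if n = b then 2 else 0) * c4 R m n)"
proof -
  define S where "S s = sandwich (kron (proj s k) (1\<^sub>m 2)) R" for s
  have C: "S s \<in> carrier_mat 4 4" for s unfolding S_def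
    by (intro sandwich_carrier kron_carrier2 R proj_carrier one_carrier_mat)
  define f where "f s m = c2 m (sandwich (proj s k) (pauli a))" for s m
  define g where "g n = c2 n (sandwich (1\<^sub>m 2) (pauli b))" for n
  have sw: "4 * c4 (S s) a b = (\<Sum>m<4. \<Sum>n<4. f s m * g n * c4 R m n)" for s
    unfolding S_def f_def g_def by (rule sw_c4[OF R proj_carrier one_carrier_mat])
  have "c4 (rho_right R k) a b = c4 (S 1) a b + c4 (S (-1)) a b"
    unfolding rho_right_def S_def[symmetric] using C by (simp add: c4_add)
  then have "4 * c4 (rho_right R k) a b = 4 * c4 (S 1) a b + 4 * c4 (S (-1)) a b"
    by (simp add: algebra_simps)
  also have "\<dots> = (\<Sum>m<4. \<Sum>n<4. (f 1 m + f (-1) m) * g n * c4 R m n)"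
    unfolding sw by (simp add: algebra_simps sum.distrib)
  also have "\<dots> = (\<Sum>m<4. \<Sum>n<4. complex_of_real (phic k m a) * (if n = b then 2 else 0) * c4 R m n)"
    by (intro sum.cong refl) (simp add: f_def g_def phi_coef id_coef ab)
  finally show ?thesis .
qed

lemma left_c4:
  assumes R: "R \<in> carrier_mat 4 4" and ab: "a < 4" "b < 4"
  shows "4 * c4 (rho_left R l) a b = (\<Sum>m<4. \<Sum>n<4. (if m = a then 2 else 0) * complex_of_real (phic l n b) * c4 R m n)"
proof -
  define S where "S s = sandwich (kron (1\<^sub>m 2) (proj s l)) R" for s
  have C: "S s \<in> carrier_mat 4 4" for s unfolding S_def
    by (intro sandwich_carrier kron_carrier2 R proj_carrier one_carrier_mat)
  define f where "f m = c2 m (sandwich (1\<^sub>m 2) (pauli a))" for m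
  define g where "g s n = c2 n (sandwich (proj s l) (pauli b))" for s n
  have sw: "4 * c4 (S s) a b = (\<Sum>m<4. \<Sum>n<4. f m * g s n * c4 R m n)" for s
    unfolding S_def f_def g_def by (rule sw_c4[OF R one_carrier_mat proj_carrier])
  have "c4 (rho_left R l) a b = c4 (S 1) a b + c4 (S (-1)) a b"
    unfolding rho_left_def S_def[symmetric] using C by (simp add: c4_add)
  then have "4 * c4 (rho_left R l) a b = 4 * c4 (S 1) a b + 4 * c4 (S (-1)) a b"
    by (simp add: algebra_simps)
  also have "\<dots> = (\<Sum>m<4. \<Sum>n<4. f m * (g 1 n + g (-1) n) * c4 R m n)"
    unfolding sw by (simp add: algebra_simps sum.distrib)
  also have "\<dots> = (\<Sum>m<4. \<Sum>n<4. (if m = a then 2 else 0) * complex_of_real (phic l n b) * c4 R m n)"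
    by (intro sum.cong refl) (simp add: f_def g_def phi_coef id_coef ab)
  finally show ?thesis .
qed


lemma real_of_herm: "cnj z = z \<Longrightarrow> z = complex_of_real (Re z)"
  by (simp add: complex_eq_iff)

lemma dist_formula:
  assumes R: "R \<in> carrier_mat 4 4" and X: "X \<in> carrier_mat 4 4"
    and y: "\<And>a b. a < 4 \<Longrightarrow> b < 4 \<Longrightarrow> c4 R a b - c4 X a b = complex_of_real (y a b)"
  shows "(HS_dist R X)\<^sup>2 = 1/4 * (\<Sum>a<4. \<Sum>b<4. (y a b)\<^sup>2)"
proof -
  have Y: "R - X \<in> carrier_mat 4 4" using X by (rule minus_carrier_mat)
  have cY: "c4 (R - X) a b = complex_of_real (y a b)" if "a < 4" "b < 4" for a b
    using c4_minus[OF R X] y[OF that] by simp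
  define S where "S = (\<Sum>a<4. \<Sum>b<4. (y a b)\<^sup>2)"
  define M where "M = mtrace ((R - X) * dagger (R - X))"
  have "4 * M = (\<Sum>a<4. \<Sum>b<4. complex_of_real ((y a b)\<^sup>2))"
    unfolding M_def parseval4[OF Y]
    by (intro sum.cong refl) (simp add: cY power2_eq_square)
  also have "\<dots> = complex_of_real S" by (simp add: S_def)
  finally have h: "4 * M = complex_of_real S" .
  have "4 * Re M = S" using arg_cong[where f=Re, OF h] by simp
  then have ReM: "Re M = S / 4" by simp
  have S0: "0 \<le> S" unfolding S_def by (intro sum_nonneg) auto
  have "(HS_dist R X)\<^sup>2 = S / 4" unfolding HS_dist_def M_def[symmetric] ReM using S0 by simp
  then show ?thesis by (simp add: S_def)
qed

lemma phic_unit: "unit3 k \<Longrightarrow> phic k m a = (if m = 0 \<and> a = 0 then 2 else if m = 0 \<or> a = 0 then 0 else 2 * k m * k a)"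
  by (simp add: phic_def unit3_def)

lemma poly_chi:
  fixes T :: "nat \<Rightarrow> nat \<Rightarrow> real"
  shows "(\<Sum>i\<in>{1,2,3::nat}. \<Sum>j\<in>{1,2,3::nat}. (T i j - k i * l j * c)\<^sup>2)
     = (\<Sum>i\<in>{1,2,3::nat}. \<Sum>j\<in>{1,2,3::nat}. (T i j)\<^sup>2)
       - 2 * c * (\<Sum>i\<in>{1,2,3::nat}. \<Sum>j\<in>{1,2,3::nat}. k i * l j * T i j)
       + c\<^sup>2 * ((k 1)\<^sup>2 + (k 2)\<^sup>2 + (k 3)\<^sup>2) * ((l 1)\<^sup>2 + (l 2)\<^sup>2 + (l 3)\<^sup>2)"
proof -
  have e: "\<And>i j. (T i j - k i * l j * c)\<^sup>2 = (T i j)\<^sup>2 - 2 * c * (k i * l j * T i j) + c\<^sup>2 * ((k i)\<^sup>2 * (l j)\<^sup>2)"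
    by (simp add: power2_eq_square algebra_simps)
  have f: "(\<Sum>i\<in>{1,2,3::nat}. \<Sum>j\<in>{1,2,3::nat}. c\<^sup>2 * ((k i)\<^sup>2 * (l j)\<^sup>2)) = c\<^sup>2 * ((k 1)\<^sup>2 + (k 2)\<^sup>2 + (k 3)\<^sup>2) * ((l 1)\<^sup>2 + (l 2)\<^sup>2 + (l 3)\<^sup>2)"
    by (simp add: algebra_simps)
  have g: "(\<Sum>i\<in>{1,2,3::nat}. \<Sum>j\<in>{1,2,3::nat}. 2 * c * (k i * l j * T i j)) = 2 * c * (\<Sum>i\<in>{1,2,3::nat}. \<Sum>j\<in>{1,2,3::nat}. k i * l j * T i j)"
    by (simp only: sum_distrib_left)
  show ?thesis
    unfolding e sum.distrib sum_subtractf f g ..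
qed

lemma poly_right:
  fixes T :: "nat \<Rightarrow> nat \<Rightarrow> real"
  shows "(\<Sum>i\<in>{1,2,3::nat}. \<Sum>j\<in>{1,2,3::nat}. (T i j - k i * d j)\<^sup>2)
     = (\<Sum>i\<in>{1,2,3::nat}. \<Sum>j\<in>{1,2,3::nat}. (T i j)\<^sup>2)
       - 2 * (\<Sum>i\<in>{1,2,3::nat}. \<Sum>j\<in>{1,2,3::nat}. k i * d j * T i j)
       + ((k 1)\<^sup>2 + (k 2)\<^sup>2 + (k 3)\<^sup>2) * ((d 1)\<^sup>2 + (d 2)\<^sup>2 + (d 3)\<^sup>2)"
proof -
  have e: "\<And>i j. (T i j - k i * d j)\<^sup>2 = (T i j)\<^sup>2 - 2 * (k i * d j * T i j) + ((k i)\<^sup>2 * (d j)\<^sup>2)"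
    by (simp add: power2_eq_square algebra_simps)
  have f: "(\<Sum>i\<in>{1,2,3::nat}. \<Sum>j\<in>{1,2,3::nat}. ((k i)\<^sup>2 * (d j)\<^sup>2)) = ((k 1)\<^sup>2 + (k 2)\<^sup>2 + (k 3)\<^sup>2) * ((d 1)\<^sup>2 + (d 2)\<^sup>2 + (d 3)\<^sup>2)"
    by (simp add: algebra_simps)
  have g: "(\<Sum>i\<in>{1,2,3::nat}. \<Sum>j\<in>{1,2,3::nat}. 2 * (k i * d j * T i j)) = 2 * (\<Sum>i\<in>{1,2,3::nat}. \<Sum>j\<in>{1,2,3::nat}. k i * d j * T i j)"
    by (simp only: sum_distrib_left)
  show ?thesis
    unfolding e sum.distrib sum_subtractf f g ..
qed

lemma sum_drop0: "(\<Sum>a<4::nat. \<Sum>b<4::nat. (if a = 0 \<or> b = 0 then 0 else f a b)) = (\<Sum>i\<in>{1,2,3::nat}. \<Sum>j\<in>{1,2,3::nat}. f i j)"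
  by (simp add: sum4' ac_simps)

lemma y_chi:
  fixes r :: "nat \<Rightarrow> nat \<Rightarrow> real"
  assumes k: "unit3 k" and l: "unit3 l" and r0: "r 0 0 = 1" "r 1 0 = 0" "r 2 0 = 0" "r 3 0 = 0" "r 0 1 = 0" "r 0 2 = 0" "r 0 3 = 0"
    and ab: "a < 4" "b < 4"
  shows "r a b - 1/4 * (\<Sum>m<4. \<Sum>n<4. phic k m a * phic l n b * r m n)
     = (if a = 0 \<or> b = 0 then 0 else r a b - k a * l b * (\<Sum>i\<in>{1,2,3::nat}. \<Sum>j\<in>{1,2,3::nat}. k i * l j * r i j))"
  using ab
  apply (simp add: phic_unit[OF k] phic_unit[OF l])
  apply (elim less4E[of a] less4E[of b])
  apply (simp_all add: sum4' r0 r0[unfolded One_nat_def] algebra_simps)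
  done

lemma y_right:
  fixes r :: "nat \<Rightarrow> nat \<Rightarrow> real"
  assumes k: "unit3 k" and r0: "r 0 0 = 1" "r 1 0 = 0" "r 2 0 = 0" "r 3 0 = 0" "r 0 1 = 0" "r 0 2 = 0" "r 0 3 = 0"
    and ab: "a < 4" "b < 4"
  shows "r a b - 1/4 * (\<Sum>m<4. \<Sum>n<4. phic k m a * (if n = b then 2 else 0) * r m n)
     = (if a = 0 \<or> b = 0 then 0 else r a b - k a * (\<Sum>i\<in>{1,2,3::nat}. k i * r i b))"
  using ab
  apply (simp add: phic_unit[OF k])
  apply (elim less4E[of a] less4E[of b])
  apply (simp_all add: sum4' r0 r0[unfolded One_nat_def] algebra_simps)
  done

lemma y_left:
  fixes r :: "nat \<Rightarrow> nat \<Rightarrow> real"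
  assumes l: "unit3 l" and r0: "r 0 0 = 1" "r 1 0 = 0" "r 2 0 = 0" "r 3 0 = 0" "r 0 1 = 0" "r 0 2 = 0" "r 0 3 = 0"
    and ab: "a < 4" "b < 4"
  shows "r a b - 1/4 * (\<Sum>m<4. \<Sum>n<4. (if m = a then 2 else 0) * phic l n b * r m n)
     = (if a = 0 \<or> b = 0 then 0 else r a b - l b * (\<Sum>j\<in>{1,2,3::nat}. l j * r a j))"
  using ab
  apply (simp add: phic_unit[OF l])
  apply (elim less4E[of a] less4E[of b])
  apply (simp_all add: sum4' r0 r0[unfolded One_nat_def] algebra_simps)
  done


lemma chi_carrier: "R \<in> carrier_mat 4 4 \<Longrightarrow> chi R k l \<in> carrier_mat 4 4"
  unfolding chi_def by (intro add_carrier_mat sandwich_carrier kron_carrier2 proj_carrier)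
lemma right_carrier: "R \<in> carrier_mat 4 4 \<Longrightarrow> rho_right R k \<in> carrier_mat 4 4"
  unfolding rho_right_def by (intro add_carrier_mat sandwich_carrier kron_carrier2 proj_carrier one_carrier_mat)
lemma left_carrier: "R \<in> carrier_mat 4 4 \<Longrightarrow> rho_left R k \<in> carrier_mat 4 4"
  unfolding rho_left_def by (intro add_carrier_mat sandwich_carrier kron_carrier2 proj_carrier one_carrier_mat)

definition good :: "complex mat \<Rightarrow> bool" where
  "good R \<longleftrightarrow> R \<in> carrier_mat 4 4 \<and> dagger R = R \<and> c4 R 0 0 = 1 \<and>
     (\<forall>i\<in>{1,2,3}. c4 R i 0 = 0) \<and> (\<forall>i\<in>{1,2,3}. c4 R 0 i = 0)"

lemma good_r:
  assumes g: "good R"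
  defines "r \<equiv> \<lambda>m n. Re (c4 R m n)"
  shows "\<And>m n. m < 4 \<Longrightarrow> n < 4 \<Longrightarrow> c4 R m n = complex_of_real (r m n)"
    and "r 0 0 = 1" "r 1 0 = 0" "r 2 0 = 0" "r 3 0 = 0" "r 0 1 = 0" "r 0 2 = 0" "r 0 3 = 0"
proof -
  have R: "R \<in> carrier_mat 4 4" and h: "dagger R = R" using g by (auto simp: good_def)
  show "\<And>m n. m < 4 \<Longrightarrow> n < 4 \<Longrightarrow> c4 R m n = complex_of_real (r m n)"
    unfolding r_def by (rule real_of_herm[OF herm4[OF R h]])
  show "r 0 0 = 1" "r 1 0 = 0" "r 2 0 = 0" "r 3 0 = 0" "r 0 1 = 0" "r 0 2 = 0" "r 0 3 = 0"
    using g by (auto simp: good_def r_def)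
qed

lemma chi_dist:
  assumes g: "good R" and k: "unit3 k" and l: "unit3 l"
  shows "(HS_dist R (chi R k l))\<^sup>2 = 1/4 * ((\<Sum>i\<in>{1,2,3::nat}. \<Sum>j\<in>{1,2,3::nat}. (Re (c4 R i j))\<^sup>2)
            - (\<Sum>i\<in>{1,2,3::nat}. \<Sum>j\<in>{1,2,3::nat}. k i * l j * Re (c4 R i j))\<^sup>2)"
proof -
  define r where "r m n = Re (c4 R m n)" for m n
  have R: "R \<in> carrier_mat 4 4" using g by (simp add: good_def)
  have cr: "c4 R m n = complex_of_real (r m n)" if "m < 4" "n < 4" for m n
    unfolding r_def by (rule good_r(1)[OF g that])
  have r0: "r 0 0 = 1" "r 1 0 = 0" "r 2 0 = 0" "r 3 0 = 0" "r 0 1 = 0" "r 0 2 = 0" "r 0 3 = 0"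
    unfolding r_def by (rule good_r[OF g])+
  define y where "y a b = r a b - 1/4 * (\<Sum>m<4. \<Sum>n<4. phic k m a * phic l n b * r m n)" for a b
  have y: "c4 R a b - c4 (chi R k l) a b = complex_of_real (y a b)" if ab: "a < 4" "b < 4" for a b
  proof -
    have "4 * c4 (chi R k l) a b = (\<Sum>m<4. \<Sum>n<4. complex_of_real (phic k m a * phic l n b * r m n))"
      unfolding chi_c4[OF R ab] by (intro sum.cong refl) (simp add: cr)
    also have "\<dots> = complex_of_real (\<Sum>m<4. \<Sum>n<4. phic k m a * phic l n b * r m n)" by simp
    finally show ?thesis unfolding y_def cr[OF ab] by (simp add: field_simps)
  qed
  have yv: "y a b = (if a = 0 \<or> b = 0 then 0 else
        r a b - k a * l b * (\<Sum>i\<in>{1,2,3::nat}. \<Sum>j\<in>{1,2,3::nat}. k i * l j * r i j))" if "a < 4" "b < 4" for a b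
    unfolding y_def by (rule y_chi[OF k l r0 that])
  have "(HS_dist R (chi R k l))\<^sup>2 = 1/4 * (\<Sum>a<4. \<Sum>b<4. (y a b)\<^sup>2)"
    by (rule dist_formula[OF R chi_carrier[OF R] y])
  also have "(\<Sum>a<4. \<Sum>b<4. (y a b)\<^sup>2) = (\<Sum>a<4::nat. \<Sum>b<4::nat. (if a = 0 \<or> b = 0 then 0 else
        (r a b - k a * l b * (\<Sum>i\<in>{1,2,3::nat}. \<Sum>j\<in>{1,2,3::nat}. k i * l j * r i j))\<^sup>2))"
    by (intro sum.cong refl) (simp add: yv)
  also have "\<dots> = (\<Sum>i\<in>{1,2,3::nat}. \<Sum>j\<in>{1,2,3::nat}. (r i j - k i * l j * (\<Sum>i\<in>{1,2,3::nat}. \<Sum>j\<in>{1,2,3::nat}. k i * l j * r i j))\<^sup>2)"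
    by (rule sum_drop0)
  also have "\<dots> = (\<Sum>i\<in>{1,2,3::nat}. \<Sum>j\<in>{1,2,3::nat}. (r i j)\<^sup>2) - (\<Sum>i\<in>{1,2,3::nat}. \<Sum>j\<in>{1,2,3::nat}. k i * l j * r i j)\<^sup>2"
    unfolding poly_chi using k l by (simp add: unit3_def power2_eq_square)
  finally show ?thesis by (simp add: r_def)
qed


lemma poly_left:
  fixes T :: "nat \<Rightarrow> nat \<Rightarrow> real"
  shows "(\<Sum>i\<in>{1,2,3::nat}. \<Sum>j\<in>{1,2,3::nat}. (T i j - l j * e i)\<^sup>2)
     = (\<Sum>i\<in>{1,2,3::nat}. \<Sum>j\<in>{1,2,3::nat}. (T i j)\<^sup>2)
       - 2 * (\<Sum>i\<in>{1,2,3::nat}. \<Sum>j\<in>{1,2,3::nat}. l j * e i * T i j)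
       + ((l 1)\<^sup>2 + (l 2)\<^sup>2 + (l 3)\<^sup>2) * ((e 1)\<^sup>2 + (e 2)\<^sup>2 + (e 3)\<^sup>2)"
proof -
  have e: "\<And>i j. (T i j - l j * e i)\<^sup>2 = (T i j)\<^sup>2 - 2 * (l j * e i * T i j) + ((l j)\<^sup>2 * (e i)\<^sup>2)"
    by (simp add: power2_eq_square algebra_simps)
  have f: "(\<Sum>i\<in>{1,2,3::nat}. \<Sum>j\<in>{1,2,3::nat}. ((l j)\<^sup>2 * (e i)\<^sup>2)) = ((l 1)\<^sup>2 + (l 2)\<^sup>2 + (l 3)\<^sup>2) * ((e 1)\<^sup>2 + (e 2)\<^sup>2 + (e 3)\<^sup>2)"
    by (simp add: algebra_simps)
  have g: "(\<Sum>i\<in>{1,2,3::nat}. \<Sum>j\<in>{1,2,3::nat}. 2 * (l j * e i * T i j)) = 2 * (\<Sum>i\<in>{1,2,3::nat}. \<Sum>j\<in>{1,2,3::nat}. l j * e i * T i j)"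
    by (simp only: sum_distrib_left)
  show ?thesis
    unfolding e sum.distrib sum_subtractf f g ..
qed

lemma right_dist:
  assumes g: "good R" and k: "unit3 k"
  shows "(HS_dist R (rho_right R k))\<^sup>2 = 1/4 * ((\<Sum>i\<in>{1,2,3::nat}. \<Sum>j\<in>{1,2,3::nat}. (Re (c4 R i j))\<^sup>2)
            - (\<Sum>j\<in>{1,2,3::nat}. (\<Sum>i\<in>{1,2,3::nat}. k i * Re (c4 R i j))\<^sup>2))"
proof -
  define r where "r m n = Re (c4 R m n)" for m n
  have R: "R \<in> carrier_mat 4 4" using g by (simp add: good_def)
  have cr: "c4 R m n = complex_of_real (r m n)" if "m < 4" "n < 4" for m n
    unfolding r_def by (rule good_r(1)[OF g that])
  have r0: "r 0 0 = 1" "r 1 0 = 0" "r 2 0 = 0" "r 3 0 = 0" "r 0 1 = 0" "r 0 2 = 0" "r 0 3 = 0"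
    unfolding r_def by (rule good_r[OF g])+
  define y where "y a b = r a b - 1/4 * (\<Sum>m<4. \<Sum>n<4. phic k m a * (if n = b then 2 else 0) * r m n)" for a b
  define d where "d j = (\<Sum>i\<in>{1,2,3::nat}. k i * r i j)" for j
  have y: "c4 R a b - c4 (rho_right R k) a b = complex_of_real (y a b)" if ab: "a < 4" "b < 4" for a b
  proof -
    have "4 * c4 (rho_right R k) a b = (\<Sum>m<4. \<Sum>n<4. complex_of_real (phic k m a * (if n = b then 2 else 0) * r m n))"
      unfolding right_c4[OF R ab] by (intro sum.cong refl) (simp add: cr)
    also have "\<dots> = complex_of_real (\<Sum>m<4. \<Sum>n<4. phic k m a * (if n = b then 2 else 0) * r m n)" by simp
    finally show ?thesis unfolding y_def cr[OF ab] by (simp add: field_simps)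
  qed
  have yv: "y a b = (if a = 0 \<or> b = 0 then 0 else r a b - k a * d b)" if "a < 4" "b < 4" for a b
    unfolding y_def d_def by (rule y_right[OF k r0 that])
  have "(HS_dist R (rho_right R k))\<^sup>2 = 1/4 * (\<Sum>a<4. \<Sum>b<4. (y a b)\<^sup>2)"
    by (rule dist_formula[OF R right_carrier[OF R] y])
  also have "(\<Sum>a<4. \<Sum>b<4. (y a b)\<^sup>2) = (\<Sum>a<4::nat. \<Sum>b<4::nat. (if a = 0 \<or> b = 0 then 0 else (r a b - k a * d b)\<^sup>2))"
    by (intro sum.cong refl) (simp add: yv)
  also have "\<dots> = (\<Sum>i\<in>{1,2,3::nat}. \<Sum>j\<in>{1,2,3::nat}. (r i j - k i * d j)\<^sup>2)"
    by (rule sum_drop0)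
  also have "\<dots> = (\<Sum>i\<in>{1,2,3::nat}. \<Sum>j\<in>{1,2,3::nat}. (r i j)\<^sup>2) - (\<Sum>j\<in>{1,2,3::nat}. (d j)\<^sup>2)"
  proof -
    have "(\<Sum>i\<in>{1,2,3::nat}. \<Sum>j\<in>{1,2,3::nat}. k i * d j * r i j) = (\<Sum>j\<in>{1,2,3::nat}. (d j)\<^sup>2)"
      unfolding d_def by (simp add: algebra_simps power2_eq_square)
    then show ?thesis unfolding poly_right using k by (simp add: unit3_def)
  qed
  finally show ?thesis by (simp add: r_def d_def)
qed

lemma left_dist:
  assumes g: "good R" and l: "unit3 l"
  shows "(HS_dist R (rho_left R l))\<^sup>2 = 1/4 * ((\<Sum>i\<in>{1,2,3::nat}. \<Sum>j\<in>{1,2,3::nat}. (Re (c4 R i j))\<^sup>2)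
            - (\<Sum>i\<in>{1,2,3::nat}. (\<Sum>j\<in>{1,2,3::nat}. l j * Re (c4 R i j))\<^sup>2))"
proof -
  define r where "r m n = Re (c4 R m n)" for m n
  have R: "R \<in> carrier_mat 4 4" using g by (simp add: good_def)
  have cr: "c4 R m n = complex_of_real (r m n)" if "m < 4" "n < 4" for m n
    unfolding r_def by (rule good_r(1)[OF g that])
  have r0: "r 0 0 = 1" "r 1 0 = 0" "r 2 0 = 0" "r 3 0 = 0" "r 0 1 = 0" "r 0 2 = 0" "r 0 3 = 0"
    unfolding r_def by (rule good_r[OF g])+
  define y where "y a b = r a b - 1/4 * (\<Sum>m<4. \<Sum>n<4. (if m = a then 2 else 0) * phic l n b * r m n)" for a b
  define e where "e i = (\<Sum>j\<in>{1,2,3::nat}. l j * r i j)" for i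
  have y: "c4 R a b - c4 (rho_left R l) a b = complex_of_real (y a b)" if ab: "a < 4" "b < 4" for a b
  proof -
    have "4 * c4 (rho_left R l) a b = (\<Sum>m<4. \<Sum>n<4. complex_of_real ((if m = a then 2 else 0) * phic l n b * r m n))"
      unfolding left_c4[OF R ab] by (intro sum.cong refl) (simp add: cr)
    also have "\<dots> = complex_of_real (\<Sum>m<4. \<Sum>n<4. (if m = a then 2 else 0) * phic l n b * r m n)" by simp
    finally show ?thesis unfolding y_def cr[OF ab] by (simp add: field_simps)
  qed
  have yv: "y a b = (if a = 0 \<or> b = 0 then 0 else r a b - l b * e a)" if "a < 4" "b < 4" for a b
    unfolding y_def e_def by (rule y_left[OF l r0 that])
  have "(HS_dist R (rho_left R l))\<^sup>2 = 1/4 * (\<Sum>a<4. \<Sum>b<4. (y a b)\<^sup>2)"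
    by (rule dist_formula[OF R left_carrier[OF R] y])
  also have "(\<Sum>a<4. \<Sum>b<4. (y a b)\<^sup>2) = (\<Sum>a<4::nat. \<Sum>b<4::nat. (if a = 0 \<or> b = 0 then 0 else (r a b - l b * e a)\<^sup>2))"
    by (intro sum.cong refl) (simp add: yv)
  also have "\<dots> = (\<Sum>i\<in>{1,2,3::nat}. \<Sum>j\<in>{1,2,3::nat}. (r i j - l j * e i)\<^sup>2)"
    by (rule sum_drop0)
  also have "\<dots> = (\<Sum>i\<in>{1,2,3::nat}. \<Sum>j\<in>{1,2,3::nat}. (r i j)\<^sup>2) - (\<Sum>i\<in>{1,2,3::nat}. (e i)\<^sup>2)"
  proof -
    have "(\<Sum>i\<in>{1,2,3::nat}. \<Sum>j\<in>{1,2,3::nat}. l j * e i * r i j) = (\<Sum>i\<in>{1,2,3::nat}. (e i)\<^sup>2)"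
      unfolding e_def by (simp add: algebra_simps power2_eq_square)
    then show ?thesis unfolding poly_left using l by (simp add: unit3_def)
  qed
  finally show ?thesis by (simp add: r_def e_def)
qed


lemma dagger_dagger: "dagger (dagger A) = A"
  by (rule eq_matI) (auto simp: dagger_index)

lemma dagger_mult:
  assumes A: "A \<in> carrier_mat n m" and B: "B \<in> carrier_mat m p"
  shows "dagger (A * B) = dagger B * dagger A"
proof (rule eq_matI)
  fix i j assume "i < dim_row (dagger B * dagger A)" "j < dim_col (dagger B * dagger A)"
  then have i: "i < p" and j: "j < n" using A B by auto
  have ab0: "(A * B) $$ (j,i) = (\<Sum>k<dim_col A. A $$ (j,k) * B $$ (k,i))"
    using A B i j by (intro mult_index) auto
  have ab: "(A * B) $$ (j,i) = (\<Sum>k<m. A $$ (j,k) * B $$ (k,i))"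
    using ab0 unfolding carrier_matD(2)[OF A] .
  have "dagger (A * B) $$ (i,j) = cnj (\<Sum>k<m. A $$ (j,k) * B $$ (k,i))"
    using A B i j by (simp only: ab[symmetric]) (simp add: dagger_index)
  also have "\<dots> = (\<Sum>k<m. dagger B $$ (i,k) * dagger A $$ (k,j))"
    using A B i j by (simp add: dagger_index cnj_sum mult.commute)
  also have "\<dots> = (dagger B * dagger A) $$ (i,j)"
    using A B i j by (simp add: scalar_prod_def atLeast0LessThan)
  finally show "dagger (A * B) $$ (i,j) = (dagger B * dagger A) $$ (i,j)" .
qed (use A B in auto)

lemma dagger_pauli: "n < 4 \<Longrightarrow> dagger (pauli n) = pauli n"
  apply (rule eq_matI)
  apply (auto simp: dagger_index elim!: less2E)
  apply (elim less4E; simp add: pauli_idx pauli_idx')+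
  done

lemma dagger_kron:
  assumes A: "A \<in> carrier_mat 2 2" and B: "B \<in> carrier_mat 2 2"
  shows "dagger (kron A B) = kron (dagger A) (dagger B)"
proof (rule eq_matI)
  fix i j assume "i < dim_row (kron (dagger A) (dagger B))" "j < dim_col (kron (dagger A) (dagger B))"
  then have i: "i < 4" and j: "j < 4" using A B by auto
  show "dagger (kron A B) $$ (i,j) = kron (dagger A) (dagger B) $$ (i,j)"
    using A B i j by (elim less4E[of i] less4E[of j]; simp add: dagger_index kron_index)
qed (use A B in auto)

lemma pauli_trace: "n < 4 \<Longrightarrow> mtrace (pauli n) = (if n = 0 then 2 else 0)"
  by (elim less4E; simp add: mtrace_def sum2' pauli_idx pauli_idx')

lemma pauli_trace2: "n < 4 \<Longrightarrow> m < 4 \<Longrightarrow> mtrace (pauli n * pauli m) = (if n = m then 2 else 0)"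
  by (simp add: mtrace_mult[of _ 2 2]) (elim less4E[of n] less4E[of m]; simp add: sum2' pauli_idx pauli_idx')

lemma assoc2: "A \<in> carrier_mat 2 2 \<Longrightarrow> B \<in> carrier_mat 2 2 \<Longrightarrow> C \<in> carrier_mat 2 2 \<Longrightarrow> A * B * C = A * (B * C)"
  by (rule assoc_mult_mat)
lemma mult_carrier2: "A \<in> carrier_mat 2 2 \<Longrightarrow> B \<in> carrier_mat 2 2 \<Longrightarrow> A * B \<in> carrier_mat 2 2"
  by (rule mult_carrier_mat)

definition Hm :: "complex mat \<Rightarrow> nat \<Rightarrow> complex mat" where
  "Hm U i = dagger U * pauli i * U"

definition Ocoef :: "complex mat \<Rightarrow> nat \<Rightarrow> nat \<Rightarrow> real" where
  "Ocoef U i m = Re (c2 m (Hm U i)) / 2"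

lemma Hm_carrier: "U \<in> carrier_mat 2 2 \<Longrightarrow> Hm U i \<in> carrier_mat 2 2"
  unfolding Hm_def by (auto intro!: mult_carrier_mat dagger_carrier)

lemma Hm_herm:
  assumes U: "U \<in> carrier_mat 2 2" and i: "i < 4"
  shows "dagger (Hm U i) = Hm U i"
proof -
  have dU: "dagger U \<in> carrier_mat 2 2" using U by (rule dagger_carrier)
  have c1: "dagger U * pauli i \<in> carrier_mat 2 2" using dU by auto
  have "dagger (Hm U i) = dagger U * dagger (dagger U * pauli i)"
    unfolding Hm_def by (simp add: dagger_mult[OF c1 U] dagger_dagger)
  also have "\<dots> = dagger U * (pauli i * U)"
    by (simp add: dagger_mult[OF dU pauli_carrier] dagger_dagger dagger_pauli[OF i])
  also have "\<dots> = Hm U i" unfolding Hm_def using dU U by (simp add: assoc2 mult_carrier2)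
  finally show ?thesis .
qed

lemma Hm_trace:
  assumes U: "U \<in> carrier_mat 2 2" and u: "U * dagger U = 1\<^sub>m 2"
  shows "mtrace (Hm U i) = mtrace (pauli i)"
proof -
  have dU: "dagger U \<in> carrier_mat 2 2" using U by (rule dagger_carrier)
  have c1: "dagger U * pauli i \<in> carrier_mat 2 2" using dU by auto
  have "mtrace (Hm U i) = mtrace (U * (dagger U * pauli i))"
    unfolding Hm_def by (rule mtrace_comm[OF c1 U])
  also have "\<dots> = mtrace ((U * dagger U) * pauli i)" using U dU by (simp add: assoc2 mult_carrier2)
  also have "\<dots> = mtrace (pauli i)" by (simp add: u)
  finally show ?thesis .
qed

lemma Hm_prod_trace:
  assumes U: "U \<in> carrier_mat 2 2" and u: "U * dagger U = 1\<^sub>m 2"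
  shows "mtrace (Hm U i * Hm U j) = mtrace (pauli i * pauli j)"
proof -
  have dU: "dagger U \<in> carrier_mat 2 2" using U by (rule dagger_carrier)
  have "Hm U i * Hm U j = dagger U * pauli i * (U * dagger U) * pauli j * U"
    unfolding Hm_def using U dU by (simp add: assoc2 mult_carrier2)
  also have "\<dots> = dagger U * (pauli i * pauli j) * U" using U dU by (simp add: u assoc2 mult_carrier2)
  finally have e: "Hm U i * Hm U j = dagger U * (pauli i * pauli j) * U" .
  have c1: "dagger U * (pauli i * pauli j) \<in> carrier_mat 2 2" by (intro mult_carrier2 dU pauli_carrier)
  have "mtrace (Hm U i * Hm U j) = mtrace (U * (dagger U * (pauli i * pauli j)))"
    unfolding e by (rule mtrace_comm[OF c1 U])
  also have "\<dots> = mtrace ((U * dagger U) * (pauli i * pauli j))" using U dU by (simp add: assoc2 mult_carrier2)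
  also have "\<dots> = mtrace (pauli i * pauli j)" by (simp add: u)
  finally show ?thesis .
qed


lemma c2_Hm:
  assumes U: "U \<in> carrier_mat 2 2" and m: "m < 4" and i: "i < 4"
  shows "c2 m (Hm U i) = complex_of_real (2 * Ocoef U i m)"
  using real_of_herm[OF herm2[OF Hm_carrier[OF U] Hm_herm[OF U i] m]] by (simp add: Ocoef_def)

lemma c2_0_Hm:
  assumes U: "U \<in> carrier_mat 2 2" and u: "U * dagger U = 1\<^sub>m 2" and i: "i \<in> {1,2,3}"
  shows "c2 0 (Hm U i) = 0"
proof -
  have "c2 0 (Hm U i) = mtrace (Hm U i)" using Hm_carrier[OF U, of i] by (simp add: pauli0)
  also have "\<dots> = mtrace (pauli i)" by (rule Hm_trace[OF U u])
  also have "\<dots> = 0" using i pauli_trace[of i] by auto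
  finally show ?thesis .
qed

lemma Ocoef_0:
  assumes U: "U \<in> carrier_mat 2 2" and u: "U * dagger U = 1\<^sub>m 2" and i: "i \<in> {1,2,3}"
  shows "Ocoef U i 0 = 0"
  using c2_0_Hm[OF U u i] by (simp add: Ocoef_def)

lemma Ocoef_orth:
  assumes U: "U \<in> carrier_mat 2 2" and u: "U * dagger U = 1\<^sub>m 2" and i: "i \<in> {1,2,3}" and j: "j \<in> {1,2,3}"
  shows "(\<Sum>m\<in>{1,2,3::nat}. Ocoef U i m * Ocoef U j m) = (if i = j then 1 else 0)"
proof -
  have i4: "i < 4" and j4: "j < 4" using i j by auto
  have "2 * mtrace (Hm U i * Hm U j) = (\<Sum>a<4. c2 a (Hm U i) * c2 a (Hm U j))"
    by (rule parseval2[OF Hm_carrier[OF U] Hm_carrier[OF U]])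
  also have "\<dots> = complex_of_real (4 * (\<Sum>m\<in>{1,2,3::nat}. Ocoef U i m * Ocoef U j m))"
    by (simp add: sum4' c2_Hm[OF U _ i4] c2_Hm[OF U _ j4] Ocoef_0[OF U u i] Ocoef_0[OF U u j] algebra_simps)
  finally have "complex_of_real (4 * (\<Sum>m\<in>{1,2,3::nat}. Ocoef U i m * Ocoef U j m)) = 2 * mtrace (pauli i * pauli j)"
    by (simp add: Hm_prod_trace[OF U u])
  also have "\<dots> = complex_of_real (if i = j then 4 else 0)" using pauli_trace2[OF i4 j4] by simp
  finally have "4 * (\<Sum>m\<in>{1,2,3::nat}. Ocoef U i m * Ocoef U j m) = (if i = j then 4 else 0)"
    by (simp only: of_real_eq_iff)
  then show ?thesis by (cases "i = j") auto
qed

lemma Ocoef_dagger: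
  assumes U: "U \<in> carrier_mat 2 2"
  shows "Ocoef (dagger U) m i = Ocoef U i m"
proof -
  have dU: "dagger U \<in> carrier_mat 2 2" using U by (rule dagger_carrier)
  have c1: "pauli m * dagger U \<in> carrier_mat 2 2" and c2': "pauli i * U \<in> carrier_mat 2 2"
    by (intro mult_carrier2 dU U pauli_carrier)+
  have "c2 m (Hm U i) = mtrace ((pauli m * dagger U) * (pauli i * U))"
    unfolding Hm_def using U dU by (simp add: assoc2 mult_carrier2)
  also have "\<dots> = mtrace ((pauli i * U) * (pauli m * dagger U))" by (rule mtrace_comm[OF c1 c2'])
  also have "\<dots> = c2 i (Hm (dagger U) m)"
    unfolding Hm_def dagger_dagger using U dU by (simp add: assoc2 mult_carrier2)
  finally show ?thesis by (simp add: Ocoef_def)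
qed

lemma unitary_dagger:
  assumes U: "U \<in> carrier_mat 2 2" and u: "U * dagger U = 1\<^sub>m 2"
  shows "dagger U * dagger (dagger U) = 1\<^sub>m 2"
  unfolding dagger_dagger by (rule mat_mult_left_right_inverse[OF U dagger_carrier[OF U] u])

lemma assoc4: "A \<in> carrier_mat 4 4 \<Longrightarrow> B \<in> carrier_mat 4 4 \<Longrightarrow> C \<in> carrier_mat 4 4 \<Longrightarrow> A * B * C = A * (B * C)"
  by (rule assoc_mult_mat)
lemma mult_carrier4: "A \<in> carrier_mat 4 4 \<Longrightarrow> B \<in> carrier_mat 4 4 \<Longrightarrow> A * B \<in> carrier_mat 4 4"
  by (rule mult_carrier_mat)

lemma corr_rel:
  assumes g: "good R" and U: "U \<in> carrier_mat 2 2" and u: "U * dagger U = 1\<^sub>m 2"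
    and V: "V \<in> carrier_mat 2 2" and v: "V * dagger V = 1\<^sub>m 2"
    and i: "i \<in> {1,2,3}" and j: "j \<in> {1,2,3}"
  shows "c4 (kron U V * R * dagger (kron U V)) i j
     = complex_of_real (\<Sum>m\<in>{1,2,3::nat}. \<Sum>n\<in>{1,2,3::nat}. Ocoef U i m * Ocoef V j n * Re (c4 R m n))"
proof -
  have R: "R \<in> carrier_mat 4 4" using g by (simp add: good_def)
  have i4: "i < 4" and j4: "j < 4" using i j by auto
  define W where "W = kron U V"
  have Wc: "W \<in> carrier_mat 4 4" unfolding W_def by (rule kron_carrier2[OF U V])
  have dW: "dagger W = kron (dagger U) (dagger V)" unfolding W_def by (rule dagger_kron[OF U V])
  have dWc: "dagger W \<in> carrier_mat 4 4" using Wc by (rule dagger_carrier)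
  have Sc: "kron (pauli i) (pauli j) \<in> carrier_mat 4 4" by (rule kron_carrier2) auto
  have c1: "R * dagger W * kron (pauli i) (pauli j) \<in> carrier_mat 4 4"
    by (intro mult_carrier4 R dWc Sc)
  have "c4 (W * R * dagger W) i j = mtrace (W * (R * dagger W * kron (pauli i) (pauli j)))"
    using Wc R dWc Sc by (simp add: assoc4 mult_carrier4)
  also have "\<dots> = mtrace ((R * dagger W * kron (pauli i) (pauli j)) * W)" by (rule mtrace_comm[OF Wc c1])
  also have "\<dots> = mtrace (R * (dagger W * kron (pauli i) (pauli j) * W))"
    using Wc R dWc Sc by (simp add: assoc4 mult_carrier4)
  also have "dagger W * kron (pauli i) (pauli j) * W = kron (Hm U i) (Hm V j)"
  proof -
    have dU: "dagger U \<in> carrier_mat 2 2" and dV: "dagger V \<in> carrier_mat 2 2"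
      using U V by (auto intro: dagger_carrier)
    have "dagger W * kron (pauli i) (pauli j) = kron (dagger U * pauli i) (dagger V * pauli j)"
      unfolding dW by (rule kron_mult[OF dU dV pauli_carrier pauli_carrier])
    then have "dagger W * kron (pauli i) (pauli j) * W = kron (dagger U * pauli i) (dagger V * pauli j) * kron U V"
      unfolding W_def by simp
    also have "\<dots> = kron (Hm U i) (Hm V j)" unfolding Hm_def
      by (rule kron_mult[OF mult_carrier2[OF dU pauli_carrier] mult_carrier2[OF dV pauli_carrier] U V])
    finally show ?thesis .
  qed
  finally have e: "c4 (W * R * dagger W) i j = mtrace (R * kron (Hm U i) (Hm V j))" .
  define S where "S = (\<Sum>m\<in>{1,2,3::nat}. \<Sum>n\<in>{1,2,3::nat}. Ocoef U i m * Ocoef V j n * Re (c4 R m n))"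
  have "4 * mtrace (R * kron (Hm U i) (Hm V j)) = (\<Sum>m<4. \<Sum>n<4. c2 m (Hm U i) * c2 n (Hm V j) * c4 R m n)"
    by (rule beta_expand[OF R Hm_carrier[OF U] Hm_carrier[OF V]])
  also have "\<dots> = (\<Sum>m<4::nat. \<Sum>n<4::nat. complex_of_real (if m = 0 \<or> n = 0 then 0 else
        4 * (Ocoef U i m * Ocoef V j n * Re (c4 R m n))))"
  proof (intro sum.cong refl)
    fix m n assume "m \<in> {..<4::nat}" "n \<in> {..<4::nat}"
    then have m: "m < 4" and n: "n < 4" by auto
    show "c2 m (Hm U i) * c2 n (Hm V j) * c4 R m n = complex_of_real (if m = 0 \<or> n = 0 then 0 else
        4 * (Ocoef U i m * Ocoef V j n * Re (c4 R m n)))"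
    proof (cases "m = 0 \<or> n = 0")
      case True then show ?thesis using c2_0_Hm[OF U u i] c2_0_Hm[OF V v j] by auto
    next
      case False
      obtain x where x: "c4 R m n = complex_of_real x" using good_r(1)[OF g m n] by blast
      show ?thesis using False by (simp add: c2_Hm[OF U m i4] c2_Hm[OF V n j4] x)
    qed
  qed
  also have "\<dots> = complex_of_real (\<Sum>m<4::nat. \<Sum>n<4::nat. (if m = 0 \<or> n = 0 then 0 else
        4 * (Ocoef U i m * Ocoef V j n * Re (c4 R m n))))"
    by simp
  also have "\<dots> = complex_of_real (4 * S)" unfolding S_def sum_drop0
    by (simp add: sum_distrib_left)
  finally have "4 * mtrace (R * kron (Hm U i) (Hm V j)) = complex_of_real (4 * S)" .
  then have m: "mtrace (R * kron (Hm U i) (Hm V j)) = complex_of_real S" by simp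
  show ?thesis unfolding S_def[symmetric] using e m unfolding W_def by simp
qed


lemma contract:
  fixes A :: "nat \<Rightarrow> nat \<Rightarrow> real"
  assumes I: "finite I" and m: "m \<in> I"
    and o: "\<And>p. p \<in> I \<Longrightarrow> (\<Sum>q\<in>I. A q m * A q p) = (if m = p then 1 else 0)"
  shows "(\<Sum>q\<in>I. A q m * (\<Sum>p\<in>I. A q p * x p)) = x m"
proof -
  have "(\<Sum>q\<in>I. A q m * (\<Sum>p\<in>I. A q p * x p)) = (\<Sum>q\<in>I. \<Sum>p\<in>I. A q m * A q p * x p)"
    by (simp add: sum_distrib_left mult.assoc)
  also have "\<dots> = (\<Sum>p\<in>I. \<Sum>q\<in>I. A q m * A q p * x p)" by (rule sum.swap)
  also have "\<dots> = (\<Sum>p\<in>I. (\<Sum>q\<in>I. A q m * A q p) * x p)" by (simp add: sum_distrib_right)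
  also have "\<dots> = (\<Sum>p\<in>I. (if m = p then x p else 0))" by (intro sum.cong refl) (simp add: o)
  also have "\<dots> = x m" using I m by simp
  finally show ?thesis .
qed

lemma parsev:
  fixes F :: "nat \<Rightarrow> nat \<Rightarrow> real"
  assumes I: "finite I" and Q: "finite Q"
    and o: "\<And>q q'. q \<in> Q \<Longrightarrow> q' \<in> Q \<Longrightarrow> (\<Sum>m\<in>I. F q m * F q' m) = (if q = q' then 1 else 0)"
  shows "(\<Sum>m\<in>I. (\<Sum>q\<in>Q. F q m * z q)\<^sup>2) = (\<Sum>q\<in>Q. (z q)\<^sup>2)"
proof -
  have "(\<Sum>m\<in>I. (\<Sum>q\<in>Q. F q m * z q)\<^sup>2) = (\<Sum>m\<in>I. \<Sum>q\<in>Q. \<Sum>q'\<in>Q. F q m * F q' m * (z q * z q'))"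
    by (simp add: power2_eq_square sum_product mult_ac)
  also have "\<dots> = (\<Sum>q\<in>Q. \<Sum>m\<in>I. \<Sum>q'\<in>Q. F q m * F q' m * (z q * z q'))" by (rule sum.swap)
  also have "\<dots> = (\<Sum>q\<in>Q. \<Sum>q'\<in>Q. \<Sum>m\<in>I. F q m * F q' m * (z q * z q'))"
    by (rule sum.cong[OF refl]) (rule sum.swap)
  also have "\<dots> = (\<Sum>q\<in>Q. \<Sum>q'\<in>Q. (\<Sum>m\<in>I. F q m * F q' m) * (z q * z q'))"
    by (simp add: sum_distrib_right)
  also have "\<dots> = (\<Sum>q\<in>Q. \<Sum>q'\<in>Q. (if q = q' then z q * z q' else 0))"
    by (intro sum.cong refl) (simp add: o)
  also have "\<dots> = (\<Sum>q\<in>Q. (z q)\<^sup>2)" using Q by (simp add: power2_eq_square)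
  finally show ?thesis .
qed

lemma trilinear:
  fixes A B :: "nat \<Rightarrow> nat \<Rightarrow> real"
  shows "(\<Sum>m\<in>I. \<Sum>n\<in>J. k m * l n * (\<Sum>q\<in>Q. A q m * t q * B q n))
       = (\<Sum>q\<in>Q. t q * (\<Sum>m\<in>I. A q m * k m) * (\<Sum>n\<in>J. B q n * l n))"
proof -
  have "(\<Sum>m\<in>I. \<Sum>n\<in>J. k m * l n * (\<Sum>q\<in>Q. A q m * t q * B q n))
      = (\<Sum>m\<in>I. \<Sum>n\<in>J. \<Sum>q\<in>Q. t q * (A q m * k m) * (B q n * l n))"
    by (simp add: sum_distrib_left mult_ac)
  also have "\<dots> = (\<Sum>m\<in>I. \<Sum>q\<in>Q. \<Sum>n\<in>J. t q * (A q m * k m) * (B q n * l n))"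
    by (rule sum.cong[OF refl]) (rule sum.swap)
  also have "\<dots> = (\<Sum>q\<in>Q. \<Sum>m\<in>I. \<Sum>n\<in>J. t q * (A q m * k m) * (B q n * l n))"
    by (rule sum.swap)
  also have "\<dots> = (\<Sum>q\<in>Q. t q * (\<Sum>m\<in>I. A q m * k m) * (\<Sum>n\<in>J. B q n * l n))"
    by (simp add: sum_distrib_left sum_distrib_right mult_ac)
  finally show ?thesis .
qed

lemma lin_swap:
  fixes A B :: "nat \<Rightarrow> nat \<Rightarrow> real"
  shows "(\<Sum>m\<in>I. k m * (\<Sum>q\<in>Q. A q m * t q * B q n)) = (\<Sum>q\<in>Q. B q n * ((\<Sum>m\<in>I. A q m * k m) * t q))"
proof -
  have "(\<Sum>m\<in>I. k m * (\<Sum>q\<in>Q. A q m * t q * B q n)) = (\<Sum>m\<in>I. \<Sum>q\<in>Q. B q n * (A q m * k m * t q))"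
    by (simp add: sum_distrib_left mult_ac)
  also have "\<dots> = (\<Sum>q\<in>Q. \<Sum>m\<in>I. B q n * (A q m * k m * t q))" by (rule sum.swap)
  also have "\<dots> = (\<Sum>q\<in>Q. B q n * ((\<Sum>m\<in>I. A q m * k m) * t q))"
    by (simp add: sum_distrib_left sum_distrib_right mult_ac)
  finally show ?thesis .
qed

lemma lin_swap2:
  fixes A B :: "nat \<Rightarrow> nat \<Rightarrow> real"
  shows "(\<Sum>n\<in>J. l n * (\<Sum>q\<in>Q. A q m * t q * B q n)) = (\<Sum>q\<in>Q. A q m * ((\<Sum>n\<in>J. B q n * l n) * t q))"
proof -
  have "(\<Sum>n\<in>J. l n * (\<Sum>q\<in>Q. A q m * t q * B q n)) = (\<Sum>n\<in>J. \<Sum>q\<in>Q. A q m * (B q n * l n * t q))"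
    by (simp add: sum_distrib_left mult_ac)
  also have "\<dots> = (\<Sum>q\<in>Q. \<Sum>n\<in>J. A q m * (B q n * l n * t q))" by (rule sum.swap)
  also have "\<dots> = (\<Sum>q\<in>Q. A q m * ((\<Sum>n\<in>J. B q n * l n) * t q))"
    by (simp add: sum_distrib_left sum_distrib_right mult_ac)
  finally show ?thesis .
qed

lemma cs3:
  fixes x y :: "nat \<Rightarrow> real"
  shows "(x 1 * y 1 + x 2 * y 2 + x 3 * y 3)\<^sup>2 \<le> ((x 1)\<^sup>2 + (x 2)\<^sup>2 + (x 3)\<^sup>2) * ((y 1)\<^sup>2 + (y 2)\<^sup>2 + (y 3)\<^sup>2)"
proof -
  have "((x 1)\<^sup>2 + (x 2)\<^sup>2 + (x 3)\<^sup>2) * ((y 1)\<^sup>2 + (y 2)\<^sup>2 + (y 3)\<^sup>2) - (x 1 * y 1 + x 2 * y 2 + x 3 * y 3)\<^sup>2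
     = (x 1 * y 2 - x 2 * y 1)\<^sup>2 + (x 1 * y 3 - x 3 * y 1)\<^sup>2 + (x 2 * y 3 - x 3 * y 2)\<^sup>2"
    by (simp add: power2_eq_square algebra_simps)
  moreover have "0 \<le> (x 1 * y 2 - x 2 * y 1)\<^sup>2 + (x 1 * y 3 - x 3 * y 1)\<^sup>2 + (x 2 * y 3 - x 3 * y 2)\<^sup>2" by simp
  ultimately show ?thesis by linarith
qed

lemma bound_sq:
  fixes a t :: "nat \<Rightarrow> real"
  assumes a: "(a 1)\<^sup>2 + (a 2)\<^sup>2 + (a 3)\<^sup>2 = 1"
  shows "(a 1)\<^sup>2 * (t 1)\<^sup>2 + (a 2)\<^sup>2 * (t 2)\<^sup>2 + (a 3)\<^sup>2 * (t 3)\<^sup>2 \<le> Max {(t 1)\<^sup>2, (t 2)\<^sup>2, (t 3)\<^sup>2}"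
proof -
  define M where "M = Max {(t 1)\<^sup>2, (t 2)\<^sup>2, (t 3)\<^sup>2}"
  have m: "(t 1)\<^sup>2 \<le> M" "(t 2)\<^sup>2 \<le> M" "(t 3)\<^sup>2 \<le> M" unfolding M_def by auto
  have "(a 1)\<^sup>2 * (t 1)\<^sup>2 \<le> (a 1)\<^sup>2 * M" "(a 2)\<^sup>2 * (t 2)\<^sup>2 \<le> (a 2)\<^sup>2 * M" "(a 3)\<^sup>2 * (t 3)\<^sup>2 \<le> (a 3)\<^sup>2 * M"
    using m by (auto intro: mult_left_mono)
  then have "(a 1)\<^sup>2 * (t 1)\<^sup>2 + (a 2)\<^sup>2 * (t 2)\<^sup>2 + (a 3)\<^sup>2 * (t 3)\<^sup>2 \<le> ((a 1)\<^sup>2 + (a 2)\<^sup>2 + (a 3)\<^sup>2) * M"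
    by (simp add: algebra_simps)
  then show ?thesis using a by (simp add: M_def)
qed

lemma bound_tri:
  fixes a b t :: "nat \<Rightarrow> real"
  assumes a: "(a 1)\<^sup>2 + (a 2)\<^sup>2 + (a 3)\<^sup>2 = 1" and b: "(b 1)\<^sup>2 + (b 2)\<^sup>2 + (b 3)\<^sup>2 = 1"
  shows "(t 1 * a 1 * b 1 + t 2 * a 2 * b 2 + t 3 * a 3 * b 3)\<^sup>2 \<le> Max {(t 1)\<^sup>2, (t 2)\<^sup>2, (t 3)\<^sup>2}"
proof -
  have "(t 1 * a 1 * b 1 + t 2 * a 2 * b 2 + t 3 * a 3 * b 3)\<^sup>2
      \<le> ((t 1 * a 1)\<^sup>2 + (t 2 * a 2)\<^sup>2 + (t 3 * a 3)\<^sup>2) * ((b 1)\<^sup>2 + (b 2)\<^sup>2 + (b 3)\<^sup>2)"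
    using cs3[of "\<lambda>i. t i * a i" b] by simp
  also have "\<dots> = (a 1)\<^sup>2 * (t 1)\<^sup>2 + (a 2)\<^sup>2 * (t 2)\<^sup>2 + (a 3)\<^sup>2 * (t 3)\<^sup>2"
    using b by (simp add: power_mult_distrib mult_ac)
  also have "\<dots> \<le> Max {(t 1)\<^sup>2, (t 2)\<^sup>2, (t 3)\<^sup>2}" by (rule bound_sq[OF a])
  finally show ?thesis .
qed


lemma LA_T:
  fixes A B r :: "nat \<Rightarrow> nat \<Rightarrow> real" and t :: "nat \<Rightarrow> real"
  assumes I: "finite I"
    and cA: "\<And>m p. m \<in> I \<Longrightarrow> p \<in> I \<Longrightarrow> (\<Sum>q\<in>I. A q m * A q p) = (if m = p then 1 else 0)"
    and cB: "\<And>m p. m \<in> I \<Longrightarrow> p \<in> I \<Longrightarrow> (\<Sum>q\<in>I. B q m * B q p) = (if m = p then 1 else 0)"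
    and D: "\<And>i j. i \<in> I \<Longrightarrow> j \<in> I \<Longrightarrow> (\<Sum>m\<in>I. \<Sum>n\<in>I. A i m * B j n * r m n) = (if i = j then t i else 0)"
    and m: "m \<in> I" and n: "n \<in> I"
  shows "r m n = (\<Sum>q\<in>I. A q m * t q * B q n)"
proof -
  define y where "y s p = (\<Sum>p'\<in>I. B s p' * r p p')" for s p
  have Dq: "(if q = s then t q else 0) = (\<Sum>p\<in>I. A q p * y s p)" if "q \<in> I" "s \<in> I" for q s
  proof -
    have "(\<Sum>p\<in>I. A q p * y s p) = (\<Sum>p\<in>I. \<Sum>p'\<in>I. A q p * B s p' * r p p')"
      unfolding y_def by (simp add: sum_distrib_left mult.assoc)
    also have "\<dots> = (if q = s then t q else 0)" by (rule D[OF that])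
    finally show ?thesis by simp
  qed
  have "(\<Sum>q\<in>I. A q m * t q * B q n) = (\<Sum>q\<in>I. A q m * (\<Sum>s\<in>I. B s n * (if q = s then t q else 0)))"
  proof (intro sum.cong refl)
    fix q assume q: "q \<in> I"
    have "(\<Sum>s\<in>I. B s n * (if q = s then t q else 0)) = (\<Sum>s\<in>I. (if q = s then B s n * t q else 0))"
      by (intro sum.cong refl) simp
    also have "\<dots> = B q n * t q" using I q by simp
    finally show "A q m * t q * B q n = A q m * (\<Sum>s\<in>I. B s n * (if q = s then t q else 0))" by simp
  qed
  also have "\<dots> = (\<Sum>q\<in>I. A q m * (\<Sum>s\<in>I. B s n * (\<Sum>p\<in>I. A q p * y s p)))"
    by (intro sum.cong refl) (simp add: Dq)
  also have "\<dots> = (\<Sum>q\<in>I. \<Sum>s\<in>I. B s n * (A q m * (\<Sum>p\<in>I. A q p * y s p)))"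
    by (simp add: sum_distrib_left mult_ac)
  also have "\<dots> = (\<Sum>s\<in>I. \<Sum>q\<in>I. B s n * (A q m * (\<Sum>p\<in>I. A q p * y s p)))"
    by (rule sum.swap)
  also have "\<dots> = (\<Sum>s\<in>I. B s n * (\<Sum>q\<in>I. A q m * (\<Sum>p\<in>I. A q p * y s p)))"
    by (simp add: sum_distrib_left)
  also have "\<dots> = (\<Sum>s\<in>I. B s n * y s m)"
    by (intro sum.cong refl) (simp add: contract[OF I m cA[OF m]])
  also have "\<dots> = (\<Sum>s\<in>I. B s n * (\<Sum>p'\<in>I. B s p' * r m p'))" by (simp add: y_def)
  also have "\<dots> = r m n" by (rule contract[OF I n cB[OF n]])
  finally show ?thesis by simp
qed

lemma inf2:
  fixes f :: "(nat \<Rightarrow> real) \<Rightarrow> (nat \<Rightarrow> real) \<Rightarrow> real"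
  assumes "\<And>k l. P k \<Longrightarrow> Q l \<Longrightarrow> v \<le> f k l" "P kk" "Q ll" "f kk ll = v"
  shows "Inf {f k l | k l. P k \<and> Q l} = v"
proof (rule cInf_eq_minimum)
  show "v \<in> {f k l | k l. P k \<and> Q l}" using assms(2-4) by force
  fix x assume "x \<in> {f k l | k l. P k \<and> Q l}" then show "v \<le> x" using assms(1) by auto
qed

lemma inf1:
  fixes f :: "(nat \<Rightarrow> real) \<Rightarrow> real"
  assumes "\<And>k. P k \<Longrightarrow> v \<le> f k" "P kk" "f kk = v"
  shows "Inf {f k | k. P k} = v"
proof (rule cInf_eq_minimum)
  show "v \<in> {f k | k. P k}" using assms(2-3) by force
  fix x assume "x \<in> {f k | k. P k}" then show "v \<le> x" using assms(1) by auto
qed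

lemma kron_one2: "kron (1\<^sub>m 2) (1\<^sub>m 2) = 1\<^sub>m 4"
  by (rule eq_matI) (auto simp: kron_index elim!: less4E)


lemma core:
  fixes R U V :: "complex mat" and t :: "nat \<Rightarrow> real"
  assumes g: "good R"
    and U: "U \<in> carrier_mat 2 2" and u: "U * dagger U = 1\<^sub>m 2"
    and V: "V \<in> carrier_mat 2 2" and v: "V * dagger V = 1\<^sub>m 2"
    and Dh: "\<forall>i\<in>{1,2,3}. \<forall>j\<in>{1,2,3}. c4 (kron U V * R * dagger (kron U V)) i j
             = (if i = j then complex_of_real (t i) else 0)"
  shows "G R = (1/4) * ((t 1)\<^sup>2 + (t 2)\<^sup>2 + (t 3)\<^sup>2 - Max {(t 1)\<^sup>2, (t 2)\<^sup>2, (t 3)\<^sup>2})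
         \<and> G R = G_right R \<and> G R = G_left R"
proof -
  define I where "I = {1,2,3::nat}"
  have I: "finite I" by (simp add: I_def)
  define A where "A = Ocoef U"
  define B where "B = Ocoef V"
  define r where "r m n = Re (c4 R m n)" for m n
  define M where "M = Max {(t 1)\<^sup>2, (t 2)\<^sup>2, (t 3)\<^sup>2}"
  have rA: "(\<Sum>m\<in>I. A i m * A j m) = (if i = j then 1 else 0)" if "i \<in> I" "j \<in> I" for i j
    using Ocoef_orth[OF U u] that by (simp add: A_def I_def)
  have rB: "(\<Sum>m\<in>I. B i m * B j m) = (if i = j then 1 else 0)" if "i \<in> I" "j \<in> I" for i j
    using Ocoef_orth[OF V v] that by (simp add: B_def I_def)
  have cA: "(\<Sum>q\<in>I. A q m * A q p) = (if m = p then 1 else 0)" if "m \<in> I" "p \<in> I" for m p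
    using Ocoef_orth[OF dagger_carrier[OF U] unitary_dagger[OF U u]] that
    by (simp add: A_def I_def Ocoef_dagger[OF U])
  have cB: "(\<Sum>q\<in>I. B q m * B q p) = (if m = p then 1 else 0)" if "m \<in> I" "p \<in> I" for m p
    using Ocoef_orth[OF dagger_carrier[OF V] unitary_dagger[OF V v]] that
    by (simp add: B_def I_def Ocoef_dagger[OF V])
  have D: "(\<Sum>m\<in>I. \<Sum>n\<in>I. A i m * B j n * r m n) = (if i = j then t i else 0)" if "i \<in> I" "j \<in> I" for i j
  proof -
    define S where "S = (\<Sum>m\<in>I. \<Sum>n\<in>I. A i m * B j n * r m n)"
    have ij: "i \<in> {1,2,3}" "j \<in> {1,2,3}" using that by (auto simp: I_def)
    have h1: "c4 (kron U V * R * dagger (kron U V)) i j = complex_of_real S"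
      unfolding S_def A_def B_def r_def I_def by (rule corr_rel[OF g U u V v ij])
    have h2: "c4 (kron U V * R * dagger (kron U V)) i j = (if i = j then complex_of_real (t i) else 0)"
      using Dh ij by auto
    from h1 h2 have "complex_of_real S = complex_of_real (if i = j then t i else 0)" by (cases "i = j") auto
    then show ?thesis unfolding S_def[symmetric] by (simp only: of_real_eq_iff)
  qed
  have T: "r m n = (\<Sum>q\<in>I. A q m * t q * B q n)" if "m \<in> I" "n \<in> I" for m n
    by (rule LA_T[OF I cA cB D that])
  have N: "(\<Sum>m\<in>I. \<Sum>n\<in>I. (r m n)\<^sup>2) = (\<Sum>q\<in>I. (t q)\<^sup>2)"
  proof -
    have "(\<Sum>m\<in>I. \<Sum>n\<in>I. (r m n)\<^sup>2) = (\<Sum>m\<in>I. \<Sum>n\<in>I. (\<Sum>q\<in>I. A q m * (t q * B q n))\<^sup>2)"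
      by (intro sum.cong refl) (simp add: T mult.assoc)
    also have "\<dots> = (\<Sum>n\<in>I. \<Sum>m\<in>I. (\<Sum>q\<in>I. A q m * (t q * B q n))\<^sup>2)" by (rule sum.swap)
    also have "\<dots> = (\<Sum>n\<in>I. \<Sum>q\<in>I. (t q * B q n)\<^sup>2)"
      by (rule sum.cong[OF refl]) (rule parsev[OF I I rA])
    also have "\<dots> = (\<Sum>q\<in>I. \<Sum>n\<in>I. (t q)\<^sup>2 * (B q n * B q n))"
      by (subst sum.swap) (simp add: power_mult_distrib power2_eq_square mult_ac)
    also have "\<dots> = (\<Sum>q\<in>I. (t q)\<^sup>2 * (\<Sum>n\<in>I. B q n * B q n))" by (simp add: sum_distrib_left)
    also have "\<dots> = (\<Sum>q\<in>I. (t q)\<^sup>2)" by (intro sum.cong refl) (simp add: rB)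
    finally show ?thesis .
  qed
  define a where "a k q = (\<Sum>m\<in>I. A q m * k m)" for k :: "nat \<Rightarrow> real" and q
  define b where "b l q = (\<Sum>n\<in>I. B q n * l n)" for l :: "nat \<Rightarrow> real" and q
  have unitI: "unit3 k \<longleftrightarrow> (\<Sum>m\<in>I. (k m)\<^sup>2) = 1" for k by (simp add: unit3_def I_def add.assoc)
  have na: "(\<Sum>q\<in>I. (a k q)\<^sup>2) = (\<Sum>m\<in>I. (k m)\<^sup>2)" for k
    unfolding a_def by (rule parsev[OF I I, of "\<lambda>m q. A q m"]) (simp add: cA)
  have nb: "(\<Sum>q\<in>I. (b l q)\<^sup>2) = (\<Sum>m\<in>I. (l m)\<^sup>2)" for l
    unfolding b_def by (rule parsev[OF I I, of "\<lambda>m q. B q m"]) (simp add: cB)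
  have cval: "(\<Sum>i\<in>I. \<Sum>j\<in>I. k i * l j * r i j) = (\<Sum>q\<in>I. t q * a k q * b l q)" for k l
  proof -
    have "(\<Sum>i\<in>I. \<Sum>j\<in>I. k i * l j * r i j) = (\<Sum>i\<in>I. \<Sum>j\<in>I. k i * l j * (\<Sum>q\<in>I. A q i * t q * B q j))"
      by (intro sum.cong refl) (simp add: T)
    also have "\<dots> = (\<Sum>q\<in>I. t q * a k q * b l q)" unfolding a_def b_def by (rule trilinear)
    finally show ?thesis .
  qed
  have rval: "(\<Sum>j\<in>I. (\<Sum>i\<in>I. k i * r i j)\<^sup>2) = (\<Sum>q\<in>I. (a k q * t q)\<^sup>2)" for k
  proof -
    have "(\<Sum>j\<in>I. (\<Sum>i\<in>I. k i * r i j)\<^sup>2) = (\<Sum>j\<in>I. (\<Sum>i\<in>I. k i * (\<Sum>q\<in>I. A q i * t q * B q j))\<^sup>2)"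
      by (intro sum.cong refl arg_cong[where f="\<lambda>x. x\<^sup>2"]) (simp add: T)
    also have "\<dots> = (\<Sum>j\<in>I. (\<Sum>q\<in>I. B q j * (a k q * t q))\<^sup>2)"
      unfolding a_def lin_swap ..
    also have "\<dots> = (\<Sum>q\<in>I. (a k q * t q)\<^sup>2)" by (rule parsev[OF I I rB])
    finally show ?thesis .
  qed
  have lval: "(\<Sum>i\<in>I. (\<Sum>j\<in>I. l j * r i j)\<^sup>2) = (\<Sum>q\<in>I. (b l q * t q)\<^sup>2)" for l
  proof -
    have "(\<Sum>i\<in>I. (\<Sum>j\<in>I. l j * r i j)\<^sup>2) = (\<Sum>i\<in>I. (\<Sum>j\<in>I. l j * (\<Sum>q\<in>I. A q i * t q * B q j))\<^sup>2)"
      by (intro sum.cong refl arg_cong[where f="\<lambda>x. x\<^sup>2"]) (simp add: T)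
    also have "\<dots> = (\<Sum>i\<in>I. (\<Sum>q\<in>I. A q i * (b l q * t q))\<^sup>2)"
      unfolding b_def lin_swap2 ..
    also have "\<dots> = (\<Sum>q\<in>I. (b l q * t q)\<^sup>2)" by (rule parsev[OF I I rA])
    finally show ?thesis .
  qed
  have e3: "(\<Sum>q\<in>I. f q) = f 1 + f 2 + f 3" for f :: "nat \<Rightarrow> real" by (simp add: I_def add.assoc)
  obtain p where pI: "p \<in> I" and pM: "(t p)\<^sup>2 = M"
  proof -
    have "M \<in> {(t 1)\<^sup>2, (t 2)\<^sup>2, (t 3)\<^sup>2}" unfolding M_def by (rule Max_in) auto
    then show ?thesis using that by (auto simp: I_def)
  qed
  define k0 where "k0 m = A p m" for m
  define l0 where "l0 n = B p n" for n
  have ak0: "a k0 q = (if q = p then 1 else 0)" if "q \<in> I" for q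
    unfolding a_def k0_def using rA[OF that pI] by simp
  have bl0: "b l0 q = (if q = p then 1 else 0)" if "q \<in> I" for q
    unfolding b_def l0_def using rB[OF that pI] by simp
  have k0u: "unit3 k0" unfolding unitI k0_def using rA[OF pI pI] by (simp add: power2_eq_square)
  have l0u: "unit3 l0" unfolding unitI l0_def using rB[OF pI pI] by (simp add: power2_eq_square)
  have good_sum: "(\<Sum>i\<in>{1,2,3::nat}. \<Sum>j\<in>{1,2,3::nat}. (Re (c4 R i j))\<^sup>2) = (t 1)\<^sup>2 + (t 2)\<^sup>2 + (t 3)\<^sup>2"
    using N unfolding r_def I_def by (simp add: add.assoc)
  define v where "v = (1/4) * ((t 1)\<^sup>2 + (t 2)\<^sup>2 + (t 3)\<^sup>2 - M)"
  have Gv: "G R = v"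
    unfolding G_def
  proof (rule inf2[where kk=k0 and ll=l0])
    fix k l assume k: "unit3 k" and l: "unit3 l"
    have "(\<Sum>q\<in>I. t q * a k q * b l q)\<^sup>2 \<le> M"
      unfolding e3 M_def
      by (rule bound_tri) (use na[of k] nb[of l] k l in \<open>simp_all add: unitI e3\<close>)
    then show "v \<le> (HS_dist R (chi R k l))\<^sup>2"
      unfolding chi_dist[OF g k l] good_sum v_def
      using cval[of k l] by (simp add: r_def I_def)
  next
    show "unit3 k0" by (rule k0u)
    show "unit3 l0" by (rule l0u)
    have "(\<Sum>q\<in>I. t q * a k0 q * b l0 q) = (\<Sum>q\<in>I. if q = p then t q else 0)"
      by (intro sum.cong refl) (simp add: ak0 bl0)
    also have "\<dots> = t p" using I pI by simp
    finally have c0: "(\<Sum>q\<in>I. t q * a k0 q * b l0 q) = t p" .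
    show "(HS_dist R (chi R k0 l0))\<^sup>2 = v"
      unfolding chi_dist[OF g k0u l0u] good_sum v_def
      using cval[of k0 l0] c0 pM by (simp add: r_def I_def)
  qed
  have Grv: "G_right R = v"
    unfolding G_right_def
  proof (rule inf1[where kk=k0])
    fix k assume k: "unit3 k"
    have "(\<Sum>q\<in>I. (a k q * t q)\<^sup>2) \<le> M"
      unfolding e3 M_def power_mult_distrib
      by (rule bound_sq) (use na[of k] k in \<open>simp_all add: unitI e3\<close>)
    then show "v \<le> (HS_dist R (rho_right R k))\<^sup>2"
      unfolding right_dist[OF g k] good_sum v_def
      using rval[of k] by (simp add: r_def I_def)
  next
    show "unit3 k0" by (fact k0u)
    have "(\<Sum>q\<in>I. (a k0 q * t q)\<^sup>2) = (\<Sum>q\<in>I. if q = p then (t q)\<^sup>2 else 0)"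
      by (intro sum.cong refl) (simp add: ak0)
    also have "\<dots> = (t p)\<^sup>2" using I pI by simp
    finally have c0: "(\<Sum>q\<in>I. (a k0 q * t q)\<^sup>2) = (t p)\<^sup>2" .
    show "(HS_dist R (rho_right R k0))\<^sup>2 = v"
      unfolding right_dist[OF g k0u] good_sum v_def
      using rval[of k0] c0 pM by (simp add: r_def I_def)
  qed
  have Glv: "G_left R = v"
    unfolding G_left_def
  proof (rule inf1[where kk=l0])
    fix l assume l: "unit3 l"
    have "(\<Sum>q\<in>I. (b l q * t q)\<^sup>2) \<le> M"
      unfolding e3 M_def power_mult_distrib
      by (rule bound_sq) (use nb[of l] l in \<open>simp_all add: unitI e3\<close>)
    then show "v \<le> (HS_dist R (rho_left R l))\<^sup>2"
      unfolding left_dist[OF g l] good_sum v_def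
      using lval[of l] by (simp add: r_def I_def)
  next
    show "unit3 l0" by (fact l0u)
    have "(\<Sum>q\<in>I. (b l0 q * t q)\<^sup>2) = (\<Sum>q\<in>I. if q = p then (t q)\<^sup>2 else 0)"
      by (intro sum.cong refl) (simp add: bl0)
    also have "\<dots> = (t p)\<^sup>2" using I pI by simp
    finally have c0: "(\<Sum>q\<in>I. (b l0 q * t q)\<^sup>2) = (t p)\<^sup>2" .
    show "(HS_dist R (rho_left R l0))\<^sup>2 = v"
      unfolding left_dist[OF g l0u] good_sum v_def
      using lval[of l0] c0 pM by (simp add: r_def I_def)
  qed
  show ?thesis using Gv Grv Glv by (simp add: v_def M_def)
qed


theorem mainTheorem2:
  fixes \<rho> U V :: "complex mat" and t :: "nat \<Rightarrow> real"
  assumes "density4 \<rho>"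
    and "\<forall>i\<in>{1,2,3}. mtrace (\<rho> * kron (pauli i) (1\<^sub>m 2)) = 0"
    and "\<forall>i\<in>{1,2,3}. mtrace (\<rho> * kron (1\<^sub>m 2) (pauli i)) = 0"
    and "unitary2 U" and "unitary2 V"
    and "\<forall>i\<in>{1,2,3}. \<forall>j\<in>{1,2,3}.
           corr (kron U V * \<rho> * dagger (kron U V)) i j
             = (if i = j then complex_of_real (t i) else 0)"
  shows "G \<rho> = (1/4) * ((t 1)\<^sup>2 + (t 2)\<^sup>2 + (t 3)\<^sup>2 - Max {(t 1)\<^sup>2, (t 2)\<^sup>2, (t 3)\<^sup>2})
         \<and> G \<rho> = G_right \<rho> \<and> G \<rho> = G_left \<rho>"
proof -
  have R: "\<rho> \<in> carrier_mat 4 4" and h: "dagger \<rho> = \<rho>" and tr: "mtrace \<rho> = 1"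
    using assms(1) by (auto simp: density4_def)
  have c00: "c4 \<rho> 0 0 = 1" using R tr by (simp add: pauli0 kron_one2)
  have g: "good \<rho>" unfolding good_def using R h c00 assms(2,3) by (simp add: pauli0)
  have U: "U \<in> carrier_mat 2 2" and u: "U * dagger U = 1\<^sub>m 2" using assms(4) by (auto simp: unitary2_def)
  have V: "V \<in> carrier_mat 2 2" and v: "V * dagger V = 1\<^sub>m 2" using assms(5) by (auto simp: unitary2_def)
  have Dh: "\<forall>i\<in>{1,2,3}. \<forall>j\<in>{1,2,3}. c4 (kron U V * \<rho> * dagger (kron U V)) i j
             = (if i = j then complex_of_real (t i) else 0)"
    using assms(6) by (simp add: corr_def)
  show ?thesis by (rule core[OF g U u V v Dh])
qed

end
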